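(* Let $V$ be a real $2\pi$-periodic function with $\Vert V\Vert_0<\infty$, let $n,l\in\mathbb{Z}$ with $2n+l\neq0$, and let $s_1<s_2$ lie in $[\frac l2-\frac14,\frac l2+\frac14]$. Define for $t$ in this interval $T_1(t):=P_n\mathbb{V}\widehat R_l(t)$ and $T_2(t):=P_n\mathbb{V}\widehat R_l(t)\mathbb{V}\widehat R_l(t)$. Then for every $\psi\in H^2(\mathbb{Z})$, $$\int_{s_1}^{s_2}U_0^\ast P_n\mathbb{V}\mathbb{P}^\perp_{n,l}U_0\Omega\psi\,dt=\int_{s_1}^{s_2}U_0^\ast\big(T_2\mathbb{V}+i\dot T_2-T_1\mathbb{V}\mathbb{P}_{n,l}-i\dot T_1\big)U_0\Omega\psi\,dt+\Big[iU_0^\ast(T_1-T_2)U_0\Omega\psi\Big]_{t=s_1}^{t=s_2},$$ where all operators are evaluated at time $t$ and a dot denotes the derivative in $t$.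
   Context: $\widehat V(m):=\frac{1}{\sqrt{2\pi}}\int_0^{2\pi}e^{-imx}V(x)\,dx$, $\Vert V\Vert_0^2:=\sum_m|\widehat V(m)|^2$, $H^2(\mathbb{Z}):=\{\psi:\sum_m(1+m^2)^2|\psi(m)|^2<\infty\}$. On $L^2(\mathbb{Z})$: $\mathbb{V}$ is the convolution operator $(\mathbb{V}\psi)(m)=\frac{1}{\sqrt{2\pi}}\sum_j\widehat V(m-j)\psi(j)$; $E_m(t):=(m+t)^2$; $H_0(t)\psi(m)=E_m(t)\psi(m)$ and $H(t)=H_0(t)+\mathbb{V}$; $U_0(t)$, $U(t)$ are the unitary propagators from $0$ to $t$ generated by $H_0(t)$, $H(t)$ ($i\partial_tU(t)=H(t)U(t)$, $U(0)=I$), and $\Omega(t):=U_0(t)^\ast U(t)$. $P_m$ is the orthogonal projection onto the site $m$, $\mathbb{P}_{n,l}:=P_n+P_{-n-l}$, $\mathbb{P}^\perp_{n,l}:=I-\mathbb{P}_{n,l}$, and $\widehat R_l(t):=(H_0(t)-E_n(t))^{-1}\mathbb{P}^\perp_{n,l}$ is the reduced resolvent (i.e. multiplication by $(E_m(t)-E_n(t))^{-1}$ for $m\notin\{n,-n-l\}$ and by $0$ for $m\in\{n,-n-l\}$). *)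

theory Defs
  imports "HOL-Analysis.Analysis"
begin

type_synonym state = "int \<Rightarrow> complex"

definition ell2 :: "state \<Rightarrow> bool" where
  "ell2 \<phi> \<longleftrightarrow> (\<lambda>k. (cmod (\<phi> k))^2) summable_on UNIV"

definition l2norm :: "state \<Rightarrow> real" where
  "l2norm \<phi> = sqrt (\<Sum>\<^sub>\<infinity>k. (cmod (\<phi> k))^2)"

definition H2 :: "state \<Rightarrow> bool" where
  "H2 \<psi> \<longleftrightarrow> (\<lambda>k. (1 + (real_of_int k)^2)^2 * (cmod (\<psi> k))^2) summable_on UNIV"

definition Vhat :: "(real \<Rightarrow> real) \<Rightarrow> int \<Rightarrow> complex" where
  "Vhat V m = complex_of_real (1 / sqrt (2*pi)) *
     integral {0..2*pi} (\<lambda>x. exp (- \<i> * of_int m * of_real x) * of_real (V x))"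

definition norm0_finite :: "(real \<Rightarrow> real) \<Rightarrow> bool" where
  "norm0_finite V \<longleftrightarrow> (\<lambda>m. (cmod (Vhat V m))^2) summable_on UNIV"

definition Vop :: "(real \<Rightarrow> real) \<Rightarrow> state \<Rightarrow> state" where
  "Vop V \<psi> m = complex_of_real (1 / sqrt (2*pi)) * (\<Sum>\<^sub>\<infinity>j. Vhat V (m - j) * \<psi> j)"

definition E :: "int \<Rightarrow> real \<Rightarrow> real" where
  "E m t = (real_of_int m + t)^2"

definition H0 :: "real \<Rightarrow> state \<Rightarrow> state" where
  "H0 t \<psi> m = complex_of_real (E m t) * \<psi> m"

definition Hop :: "(real \<Rightarrow> real) \<Rightarrow> real \<Rightarrow> state \<Rightarrow> state" where
  "Hop V t \<psi> m = H0 t \<psi> m + Vop V \<psi> m"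

text \<open>Free propagator: H0(t) is diagonal, so U0(t) is multiplication by
  exp(-i \<integral>_0^t E_m(s) ds) = exp(-i((m+t)^3 - m^3)/3); U0adj is its adjoint.\<close>

definition phase0 :: "int \<Rightarrow> real \<Rightarrow> real" where
  "phase0 m t = ((real_of_int m + t)^3 - (real_of_int m)^3) / 3"

definition U0 :: "real \<Rightarrow> state \<Rightarrow> state" where
  "U0 t \<psi> m = exp (- \<i> * complex_of_real (phase0 m t)) * \<psi> m"

definition U0adj :: "real \<Rightarrow> state \<Rightarrow> state" where
  "U0adj t \<psi> m = exp (\<i> * complex_of_real (phase0 m t)) * \<psi> m"

definition l2_has_deriv :: "(real \<Rightarrow> state) \<Rightarrow> state \<Rightarrow> real \<Rightarrow> bool" where
  "l2_has_deriv f D t \<longleftrightarrow>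
     ((\<lambda>s. l2norm (\<lambda>k. (f s k - f t k) / complex_of_real (s - t) - D k)) \<longlongrightarrow> 0) (at t)"

text \<open>U is the unitary propagator from 0 to t generated by H(t) = H0(t) + V:
  each U(t) is a linear, norm-preserving, surjective map of L2(Z) (unitary),
  U(0) = I, U(t) preserves H2(Z), and i d/dt U(t)\<psi> = H(t) U(t)\<psi> (strongly) for \<psi> in H2.\<close>

definition is_propagator :: "(real \<Rightarrow> real) \<Rightarrow> (real \<Rightarrow> state \<Rightarrow> state) \<Rightarrow> bool" where
  "is_propagator V U \<longleftrightarrow>
     (\<forall>t \<phi>. ell2 \<phi> \<longrightarrow> ell2 (U t \<phi>) \<and> l2norm (U t \<phi>) = l2norm \<phi>) \<and>
     (\<forall>t \<phi> w (a::complex). ell2 \<phi> \<longrightarrow> ell2 w \<longrightarrow>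
        U t (\<lambda>k. a * \<phi> k + w k) = (\<lambda>k. a * U t \<phi> k + U t w k)) \<and>
     (\<forall>t w. ell2 w \<longrightarrow> (\<exists>\<phi>. ell2 \<phi> \<and> U t \<phi> = w)) \<and>
     (\<forall>\<phi>. ell2 \<phi> \<longrightarrow> U 0 \<phi> = \<phi>) \<and>
     (\<forall>t \<phi>. H2 \<phi> \<longrightarrow> H2 (U t \<phi>) \<and>
        l2_has_deriv (\<lambda>s. U s \<phi>) (\<lambda>k. - \<i> * Hop V t (U t \<phi>) k) t)"

definition Omega :: "(real \<Rightarrow> state \<Rightarrow> state) \<Rightarrow> real \<Rightarrow> state \<Rightarrow> state" where
  "Omega U t \<psi> = U0adj t (U t \<psi>)"

definition Pm :: "int \<Rightarrow> state \<Rightarrow> state" where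
  "Pm n \<psi> k = (if k = n then \<psi> k else 0)"

definition PP :: "int \<Rightarrow> int \<Rightarrow> state \<Rightarrow> state" where
  "PP n l \<psi> k = (if k = n \<or> k = - n - l then \<psi> k else 0)"

definition PPperp :: "int \<Rightarrow> int \<Rightarrow> state \<Rightarrow> state" where
  "PPperp n l \<psi> k = (if k = n \<or> k = - n - l then 0 else \<psi> k)"

definition Rhat :: "int \<Rightarrow> int \<Rightarrow> real \<Rightarrow> state \<Rightarrow> state" where
  "Rhat n l t \<psi> k = (if k = n \<or> k = - n - l then 0
                      else \<psi> k / complex_of_real (E k t - E n t))"

definition T1 :: "(real \<Rightarrow> real) \<Rightarrow> int \<Rightarrow> int \<Rightarrow> real \<Rightarrow> state \<Rightarrow> state" where
  "T1 V n l t \<phi> = Pm n (Vop V (Rhat n l t \<phi>))"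

definition T2 :: "(real \<Rightarrow> real) \<Rightarrow> int \<Rightarrow> int \<Rightarrow> real \<Rightarrow> state \<Rightarrow> state" where
  "T2 V n l t \<phi> = Pm n (Vop V (Rhat n l t (Vop V (Rhat n l t \<phi>))))"

definition dT :: "(real \<Rightarrow> state \<Rightarrow> state) \<Rightarrow> real \<Rightarrow> state \<Rightarrow> state" where
  "dT T t \<phi> k = vector_derivative (\<lambda>s. T s \<phi> k) (at t)"

definition lhs_integrand :: "(real \<Rightarrow> real) \<Rightarrow> (real \<Rightarrow> state \<Rightarrow> state) \<Rightarrow> int \<Rightarrow> int \<Rightarrow> state \<Rightarrow> real \<Rightarrow> state" where
  "lhs_integrand V U n l \<psi> t =
     U0adj t (Pm n (Vop V (PPperp n l (U0 t (Omega U t \<psi>)))))"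

definition rhs_integrand :: "(real \<Rightarrow> real) \<Rightarrow> (real \<Rightarrow> state \<Rightarrow> state) \<Rightarrow> int \<Rightarrow> int \<Rightarrow> state \<Rightarrow> real \<Rightarrow> state" where
  "rhs_integrand V U n l \<psi> t =
     (let \<phi> = U0 t (Omega U t \<psi>) in
      U0adj t (\<lambda>k. T2 V n l t (Vop V \<phi>) k + \<i> * dT (T2 V n l) t \<phi> k
                   - T1 V n l t (Vop V (PP n l \<phi>)) k - \<i> * dT (T1 V n l) t \<phi> k))"

definition bdry :: "(real \<Rightarrow> real) \<Rightarrow> (real \<Rightarrow> state \<Rightarrow> state) \<Rightarrow> int \<Rightarrow> int \<Rightarrow> state \<Rightarrow> real \<Rightarrow> state" where
  "bdry V U n l \<psi> t =
     (let \<phi> = U0 t (Omega U t \<psi>) in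
      (\<lambda>k. \<i> * U0adj t (\<lambda>j. T1 V n l t \<phi> j - T2 V n l t \<phi> j) k))"

end

theory Submission
  imports Defs
begin

lemma summable_inv_sq_nat: "summable (\<lambda>n::nat. 1 / (1 + (real n)^2))"
proof (rule summable_comparison_test[where g="\<lambda>n. 2 * inverse ((real (Suc n))^2)"])
  have "summable (\<lambda>n::nat. inverse ((real n)^2))"
    using inverse_power_summable[of 2] by (simp add: power_inverse)
  then have "summable (\<lambda>n::nat. inverse ((real (Suc n))^2))"
    by (subst summable_Suc_iff) 
  then show "summable (\<lambda>n. 2 * inverse ((real (Suc n))^2))" by (rule summable_mult)
  show "\<exists>N. \<forall>n\<ge>N. norm (1 / (1 + (real n)\<^sup>2)) \<le> 2 * inverse ((real (Suc n))\<^sup>2)"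
  proof (intro exI allI impI)
    fix n :: nat
    have "(real (Suc n))^2 \<le> 2 * (1 + (real n)^2)"
    proof -
      have "0 \<le> (real n - 1)^2" by simp
      then show ?thesis by (simp add: power2_eq_square algebra_simps)
    qed
    then show "norm (1 / (1 + (real n)\<^sup>2)) \<le> 2 * inverse ((real (Suc n))\<^sup>2)"
    proof -
      have p: "0 < 1 + (real n)^2" by (simp add: add_pos_nonneg)
      have "norm (1 / (1 + (real n)\<^sup>2)) = 1 / (1 + (real n)\<^sup>2)" using p by simp
      also have "\<dots> \<le> 2 * inverse ((real (Suc n))\<^sup>2)"
        using \<open>(real (Suc n))^2 \<le> 2 * (1 + (real n)^2)\<close> p
        by (simp add: field_simps del: of_nat_Suc)
      finally show ?thesis .
    qed
  qed
qed

lemma summable_inv_sq_int: "(\<lambda>k::int. 1 / (1 + (real_of_int k)^2)) summable_on UNIV"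
proof -
  let ?f = "\<lambda>k::int. 1 / (1 + (real_of_int k)^2)"
  have n: "(\<lambda>n::nat. 1 / (1 + (real n)^2)) summable_on UNIV"
    using summable_inv_sq_nat by (subst summable_on_UNIV_nonneg_real_iff) auto
  have "?f summable_on (int ` UNIV)"
    by (subst summable_on_reindex) (use n in \<open>auto simp: o_def\<close>)
  moreover have "?f summable_on ((\<lambda>n. - int (Suc n)) ` UNIV)"
  proof (subst summable_on_reindex)
    show "inj_on (\<lambda>n. - int (Suc n)) UNIV" by (auto simp: inj_on_def)
    have "(\<lambda>n::nat. 1 / (1 + (real (Suc n))^2)) summable_on UNIV"
      using summable_inv_sq_nat summable_Suc_iff[of "\<lambda>n::nat. 1 / (1 + (real n)^2)"]
      by (subst summable_on_UNIV_nonneg_real_iff) auto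
    moreover have "(-1 - real x)^2 = (1 + real x)^2" for x :: nat
      by (simp add: power2_eq_square algebra_simps)
    ultimately show "(?f \<circ> (\<lambda>n. - int (Suc n))) summable_on UNIV"
      by (simp add: o_def)
  qed
  moreover have "UNIV = int ` UNIV \<union> (\<lambda>n. - int (Suc n)) ` UNIV"
  proof -
    have "k \<in> int ` UNIV \<union> (\<lambda>n. - int (Suc n)) ` UNIV" for k :: int
    proof (cases "k \<ge> 0")
      case True then show ?thesis by (metis UnI1 nonneg_int_cases rangeI)
    next
      case False
      then have "k = - int (Suc (nat (- k - 1)))" by simp
      then show ?thesis by blast
    qed
    then show ?thesis by auto
  qed
  moreover have "int ` UNIV \<inter> (\<lambda>n. - int (Suc n)) ` UNIV = {}" by auto
  ultimately show ?thesis by (metis summable_on_Un_disjoint)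
qed

lemma summable_inv_sq_int_shift: "(\<lambda>k::int. 1 / (1 + (real_of_int (k - n))^2)) summable_on UNIV"
proof -
  have "bij_betw (\<lambda>k. k - n) UNIV (UNIV::int set)"
    by (rule bij_betwI[where g="\<lambda>k. k + n"]) auto
  then show ?thesis
    using summable_inv_sq_int summable_on_reindex_bij_betw[of "\<lambda>k. k - n" UNIV UNIV "\<lambda>k::int. 1 / (1 + (real_of_int k)^2)"]
    by simp
qed

lemma cs_aux:
  fixes S A X :: real
  assumes A: "0 \<le> A" and X: "0 \<le> X" and h: "\<And>e. e > 0 \<Longrightarrow> S \<le> (e*A + X/e)/2"
  shows "S \<le> sqrt A * sqrt X"
proof (cases "A > 0 \<and> X > 0")
  case True
  define e where "e = sqrt X / sqrt A"
  have e: "e > 0" using True by (simp add: e_def)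
  have sA: "sqrt A * sqrt A = A" using A by simp
  have sX: "sqrt X * sqrt X = X" using X by simp
  have pA: "sqrt A > 0" and pX: "sqrt X > 0" using True by auto
  have "e * A = sqrt A * sqrt X" unfolding e_def
    by (subst sA[symmetric]) (use pA in \<open>simp add: field_simps\<close>)
  moreover have "X / e = sqrt A * sqrt X" unfolding e_def
    by (subst sX[symmetric]) (use pA pX in \<open>simp add: field_simps\<close>)
  ultimately show ?thesis using h[OF e] by simp
next
  case False
  show ?thesis
  proof (rule ccontr)
    assume neg: "\<not> S \<le> sqrt A * sqrt X"
    from False have "A = 0 \<or> X = 0" using A X by auto
    then have S0: "S > 0" using neg by auto
    show False
    proof (cases "A = 0")
      case True
      have "X/S \<ge> 0" using S0 X by simp
      then have d0: "X/S + 1 > 0" by linarith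
      have hh: "S \<le> ((X/S + 1)*A + X/(X/S + 1))/2" by (rule h[OF d0])
      have "S \<le> (X / (X/S + 1))/2" using hh True by simp
      moreover have "(X / (X/S + 1))/2 < S"
      proof -
        have "X/S \<ge> 0" using S0 X by simp
        then have d: "X/S + 1 > 0" by linarith
        have "S * (X/S + 1) = X + S" using S0 by (simp add: field_simps)
        then have "X \<le> S * (X/S + 1)" using S0 by simp
        then have "X / (X/S + 1) \<le> S" using d by (simp add: divide_le_eq)
        moreover have "Q \<le> S \<Longrightarrow> Q/2 < S" for Q :: real using S0 by linarith
        ultimately show ?thesis by blast
      qed
      ultimately show False by simp
    next
      case False
      then have X0: "X = 0" using \<open>A = 0 \<or> X = 0\<close> by simp
      have Apos: "A > 0" using False A by simp
      have "S \<le> ((S/A) * A)/2" using h[of "S/A"] X0 S0 Apos by simp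
      then show False using S0 Apos by simp
    qed
  qed
qed

lemma l2norm_nonneg: "l2norm x \<ge> 0"
  unfolding l2norm_def by (simp add: infsum_nonneg)

lemma ell2_comparison:
  assumes "ell2 x" and "\<And>k. cmod (y k) \<le> C * cmod (x k)"
  shows "ell2 y" "l2norm y \<le> \<bar>C\<bar> * l2norm x"
proof -
  have le: "(cmod (y k))^2 \<le> C^2 * (cmod (x k))^2" for k
  proof -
    have "0 \<le> cmod (y k)" by simp
    then have "(cmod (y k))^2 \<le> (C * cmod (x k))^2" using power_mono[OF assms(2)[of k] \<open>0 \<le> cmod (y k)\<close>] by simp
    then show ?thesis by (simp add: power_mult_distrib)
  qed
  have s: "(\<lambda>k. C^2 * (cmod (x k))^2) summable_on UNIV"
    using assms(1) unfolding ell2_def by (rule summable_on_cmult_right)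
  show "ell2 y" unfolding ell2_def
    by (rule summable_on_comparison_test[OF s]) (use le in auto)
  then have "(\<Sum>\<^sub>\<infinity>k. (cmod (y k))^2) \<le> (\<Sum>\<^sub>\<infinity>k. C^2 * (cmod (x k))^2)"
    using s le unfolding ell2_def by (intro infsum_mono) auto
  also have "\<dots> = C^2 * (\<Sum>\<^sub>\<infinity>k. (cmod (x k))^2)" by (rule infsum_cmult_right') 
  finally have "sqrt (\<Sum>\<^sub>\<infinity>k. (cmod (y k))^2) \<le> sqrt (C^2 * (\<Sum>\<^sub>\<infinity>k. (cmod (x k))^2))"
    by (rule real_sqrt_le_mono)
  then show "l2norm y \<le> \<bar>C\<bar> * l2norm x" unfolding l2norm_def by (simp add: real_sqrt_mult)
qed

lemma ell2_weight:
  fixes w :: "int \<Rightarrow> real"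
  assumes "(\<lambda>k. (w k)^2) summable_on UNIV" and "\<And>k. cmod (y k) \<le> C * w k"
  shows "ell2 y" "l2norm y \<le> \<bar>C\<bar> * sqrt (\<Sum>\<^sub>\<infinity>k. (w k)^2)"
proof -
  have e: "ell2 (\<lambda>k. complex_of_real (w k))" using assms(1) by (simp add: ell2_def)
  have b: "cmod (y k) \<le> \<bar>C\<bar> * cmod (complex_of_real (w k))" for k
  proof -
    have "C * w k \<le> \<bar>C * w k\<bar>" by simp
    then show ?thesis using assms(2)[of k] by (simp add: abs_mult)
  qed
  show "ell2 y" by (rule ell2_comparison(1)[OF e b])
  show "l2norm y \<le> \<bar>C\<bar> * sqrt (\<Sum>\<^sub>\<infinity>k. (w k)^2)"
    using ell2_comparison(2)[OF e b] by (simp add: l2norm_def)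
qed

lemma ell2_add:
  assumes "ell2 x" "ell2 y" shows "ell2 (\<lambda>k. x k + y k)"
proof -
  have s: "(\<lambda>k. 2 * (cmod (x k))^2 + 2 * (cmod (y k))^2) summable_on UNIV"
    using assms unfolding ell2_def by (intro summable_on_add summable_on_cmult_right)
  have "(cmod (x k + y k))^2 \<le> 2 * (cmod (x k))^2 + 2 * (cmod (y k))^2" for k
  proof -
    have "(cmod (x k + y k))^2 \<le> (cmod (x k) + cmod (y k))^2"
      by (simp add: norm_triangle_ineq power_mono)
    also have "\<dots> \<le> 2 * (cmod (x k))^2 + 2 * (cmod (y k))^2"
    proof -
      have "0 \<le> (cmod (x k) - cmod (y k))^2" by simp
      then show ?thesis by (simp add: power2_eq_square algebra_simps)
    qed
    finally show ?thesis .
  qed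
  then show ?thesis unfolding ell2_def
    by (intro summable_on_comparison_test[OF s]) auto
qed

lemma ell2_scale: assumes "ell2 x" shows "ell2 (\<lambda>k. a * x k)"
  by (rule ell2_comparison(1)[OF assms, of _ "cmod a"]) (simp add: norm_mult)

lemma ell2_minus: assumes "ell2 x" shows "ell2 (\<lambda>k. - x k)"
  by (rule ell2_comparison(1)[OF assms, of _ 1]) simp

lemma ell2_diff: assumes "ell2 x" "ell2 y" shows "ell2 (\<lambda>k. x k - y k)"
  using ell2_add[OF assms(1) ell2_minus[OF assms(2)]] by simp

lemma ell2_zero: "ell2 (\<lambda>k. 0)" by (simp add: ell2_def)

lemma ell2_prod_abs:
  assumes "ell2 a" "ell2 x" shows "(\<lambda>k. cmod (a k * x k)) summable_on UNIV"
proof -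
  have s: "(\<lambda>k. (cmod (a k))^2 + (cmod (x k))^2) summable_on UNIV"
    using assms unfolding ell2_def by (intro summable_on_add)
  have "cmod (a k * x k) \<le> (cmod (a k))^2 + (cmod (x k))^2" for k
  proof -
    have "0 \<le> (cmod (a k) - cmod (x k))^2" by simp
    then have "2 * (cmod (a k) * cmod (x k)) \<le> (cmod (a k))^2 + (cmod (x k))^2"
      by (simp add: power2_eq_square algebra_simps)
    moreover have "0 \<le> cmod (a k) * cmod (x k)" by simp
    moreover have "cmod (a k * x k) = cmod (a k) * cmod (x k)" by (simp add: norm_mult)
    ultimately show ?thesis by linarith
  qed
  then show ?thesis by (intro summable_on_comparison_test[OF s]) auto
qed

lemma ell2_prod: assumes "ell2 a" "ell2 x" shows "(\<lambda>k. a k * x k) summable_on UNIV"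
  by (rule abs_summable_summable) (use ell2_prod_abs[OF assms] in simp)

lemma cauchy_schwarz_abs:
  assumes "ell2 a" "ell2 x"
  shows "(\<Sum>\<^sub>\<infinity>k. cmod (a k * x k)) \<le> l2norm a * l2norm x"
proof -
  let ?A = "\<Sum>\<^sub>\<infinity>k. (cmod (a k))^2" and ?X = "\<Sum>\<^sub>\<infinity>k. (cmod (x k))^2"
  have sa: "(\<lambda>k. (cmod (a k))^2) summable_on UNIV" and sx: "(\<lambda>k. (cmod (x k))^2) summable_on UNIV"
    using assms by (auto simp: ell2_def)
  have "(\<Sum>\<^sub>\<infinity>k. cmod (a k * x k)) \<le> sqrt ?A * sqrt ?X"
  proof (rule cs_aux)
    show "0 \<le> ?A" "0 \<le> ?X" by (auto intro: infsum_nonneg)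
    fix e :: real assume e: "e > 0"
    have pt: "cmod (a k * x k) \<le> (e/2) * (cmod (a k))^2 + (1/(2*e)) * (cmod (x k))^2" for k
    proof -
      have "0 \<le> (e * cmod (a k) - cmod (x k))^2" by simp
      then have "2 * e * (cmod (a k) * cmod (x k)) \<le> e^2 * (cmod (a k))^2 + (cmod (x k))^2"
        by (simp add: power2_eq_square algebra_simps)
      then show ?thesis using e
        by (simp add: norm_mult field_simps power2_eq_square)
    qed
    have s1: "(\<lambda>k. (e/2) * (cmod (a k))^2) summable_on UNIV" using sa by (rule summable_on_cmult_right)
    have s1': "(\<lambda>k. (1/(2*e)) * (cmod (x k))^2) summable_on UNIV" using sx by (rule summable_on_cmult_right)
    have s2: "(\<lambda>k. (e/2) * (cmod (a k))^2 + (1/(2*e)) * (cmod (x k))^2) summable_on UNIV"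
      using s1 s1' by (rule summable_on_add)
    have "(\<Sum>\<^sub>\<infinity>k. cmod (a k * x k)) \<le> (\<Sum>\<^sub>\<infinity>k. (e/2) * (cmod (a k))^2 + (1/(2*e)) * (cmod (x k))^2)"
      by (rule infsum_mono[OF ell2_prod_abs[OF assms] s2 pt])
    also have "\<dots> = (\<Sum>\<^sub>\<infinity>k. (e/2) * (cmod (a k))^2) + (\<Sum>\<^sub>\<infinity>k. (1/(2*e)) * (cmod (x k))^2)"
      by (rule infsum_add[OF s1 s1'])
    also have "\<dots> = (e/2) * ?A + (1/(2*e)) * ?X"
      by (simp only: infsum_cmult_right')
    also have "\<dots> = (e * ?A + ?X / e) / 2" by (simp add: field_simps)
    finally show "(\<Sum>\<^sub>\<infinity>k. cmod (a k * x k)) \<le> (e * ?A + ?X / e) / 2" .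
  qed
  then show ?thesis by (simp add: l2norm_def)
qed

lemma cauchy_schwarz:
  assumes "ell2 a" "ell2 x"
  shows "cmod (\<Sum>\<^sub>\<infinity>k. a k * x k) \<le> l2norm a * l2norm x"
  using norm_infsum_bound[of "\<lambda>k. a k * x k" UNIV] ell2_prod_abs[OF assms] cauchy_schwarz_abs[OF assms]
  by simp

lemma infsum_finite_sum:
  fixes f :: "'i \<Rightarrow> 'a \<Rightarrow> real"
  assumes "finite F" "\<And>m. m \<in> F \<Longrightarrow> f m summable_on UNIV"
  shows "(\<lambda>j. \<Sum>m\<in>F. f m j) summable_on UNIV \<and> (\<Sum>\<^sub>\<infinity>j. \<Sum>m\<in>F. f m j) = (\<Sum>m\<in>F. \<Sum>\<^sub>\<infinity>j. f m j)"
  using assms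
proof (induction F rule: finite_induct)
  case empty then show ?case by simp
next
  case (insert a F)
  then have sa: "f a summable_on UNIV" and sF: "(\<lambda>j. \<Sum>m\<in>F. f m j) summable_on UNIV"
    and eF: "(\<Sum>\<^sub>\<infinity>j. \<Sum>m\<in>F. f m j) = (\<Sum>m\<in>F. \<Sum>\<^sub>\<infinity>j. f m j)" by auto
  have "(\<lambda>j. f a j + (\<Sum>m\<in>F. f m j)) summable_on UNIV" using sa sF by (rule summable_on_add)
  moreover have "(\<Sum>\<^sub>\<infinity>j. f a j + (\<Sum>m\<in>F. f m j)) = (\<Sum>\<^sub>\<infinity>j. f a j) + (\<Sum>\<^sub>\<infinity>j. \<Sum>m\<in>F. f m j)"
    using sa sF by (rule infsum_add)
  ultimately show ?case using insert.hyps eF by simp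
qed

lemma bij_shift: "bij_betw (\<lambda>j::int. a - j) UNIV UNIV" "bij_betw (\<lambda>j::int. j - a) UNIV UNIV"
  by (rule bij_betwI[where g="\<lambda>k. a - k"]; simp) (rule bij_betwI[where g="\<lambda>k. k + a"]; simp)

lemma ell2_shift1: "ell2 v \<Longrightarrow> ell2 (\<lambda>j. v (a - j))"
  unfolding ell2_def using summable_on_reindex_bij_betw[OF bij_shift(1), of "\<lambda>k. (cmod (v k))^2"] by simp
lemma ell2_shift2: "ell2 v \<Longrightarrow> ell2 (\<lambda>j. v (j - a))"
  unfolding ell2_def using summable_on_reindex_bij_betw[OF bij_shift(2), of "\<lambda>k. (cmod (v k))^2"] by simp
lemma l2norm_shift1: "l2norm (\<lambda>j. v (a - j)) = l2norm v"
  unfolding l2norm_def using infsum_reindex_bij_betw[OF bij_shift(1), of "\<lambda>k. (cmod (v k))^2"] by simp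
lemma l2norm_shift2: "l2norm (\<lambda>j. v (j - a)) = l2norm v"
  unfolding l2norm_def using infsum_reindex_bij_betw[OF bij_shift(2), of "\<lambda>k. (cmod (v k))^2"] by simp

lemma ell2_pointwise:
  assumes "ell2 v" shows "cmod (v k) \<le> l2norm v"
proof -
  have "(\<Sum>j\<in>{k}. (cmod (v j))^2) \<le> (\<Sum>\<^sub>\<infinity>j. (cmod (v j))^2)"
    using assms unfolding ell2_def by (rule finite_sum_le_infsum) simp_all
  then have "(cmod (v k))^2 \<le> (\<Sum>\<^sub>\<infinity>j. (cmod (v j))^2)" by simp
  then have "sqrt ((cmod (v k))^2) \<le> l2norm v" unfolding l2norm_def by (rule real_sqrt_le_mono)
  then show ?thesis by simp
qed

lemma H2_ell2: assumes "H2 \<psi>" shows "ell2 \<psi>"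
proof -
  have "(cmod (\<psi> k))^2 \<le> (1 + (real_of_int k)^2)^2 * (cmod (\<psi> k))^2" for k
  proof -
    have "1 \<le> 1 + (real_of_int k)^2" by simp
    then have "1 \<le> (1 + (real_of_int k)^2)^2" by (rule one_le_power)
    from mult_right_mono[OF this, of "(cmod (\<psi> k))^2"] show ?thesis by simp
  qed
  note le = this
  show ?thesis using assms unfolding ell2_def H2_def
    by (rule summable_on_comparison_test[of "\<lambda>k. (1 + (real_of_int k)^2)^2 * (cmod (\<psi> k))^2"]) (simp_all add: le)
qed

lemma aux_div:
  fixes W c :: real
  assumes W: "W > 0" and h: "2 * (W * c) \<le> (W * c)^2 + 1"
  shows "2 * c \<le> W * c^2 + 1 / W"
proof -
  have "W * (W * c^2 + 1 / W) = (W * c)^2 + 1" using W by (simp add: field_simps power2_eq_square)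
  then have "W * (2 * c) \<le> W * (W * c^2 + 1 / W)" using h by (simp add: algebra_simps)
  then show ?thesis using W by (rule mult_left_le_imp_le) 
qed

lemma H2_ell1: assumes "H2 \<psi>" shows "(\<lambda>k. cmod (\<psi> k)) summable_on UNIV"
proof -
  let ?w = "\<lambda>k::int. (1 + (real_of_int k)^2)"
  have s1: "(\<lambda>k. ?w k^2 * (cmod (\<psi> k))^2) summable_on UNIV" using assms by (simp add: H2_def)
  have s2: "(\<lambda>k. 1 / ?w k) summable_on UNIV" by (rule summable_inv_sq_int)
  have le: "cmod (\<psi> k) \<le> ?w k^2 * (cmod (\<psi> k))^2 + 1 / ?w k" for k
  proof -
    have w: "?w k \<ge> 1" by simp
    have "0 \<le> (?w k * cmod (\<psi> k) - 1)^2" by simp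
    then have h2: "2 * (?w k * cmod (\<psi> k)) \<le> (?w k * cmod (\<psi> k))^2 + 1"
      by (simp add: power2_eq_square algebra_simps)
    have wp: "?w k > 0" using w by linarith
    have "2 * cmod (\<psi> k) \<le> ?w k * (cmod (\<psi> k))^2 + 1 / ?w k"
      by (rule aux_div[OF wp h2])
    moreover have "?w k * (cmod (\<psi> k))^2 \<le> ?w k^2 * (cmod (\<psi> k))^2"
    proof -
      have "?w k * 1 \<le> ?w k * ?w k" by (rule mult_left_mono) (use w in linarith)+
      then have "?w k \<le> ?w k^2" by (simp add: power2_eq_square)
      then show ?thesis by (rule mult_right_mono) simp
    qed
    moreover have "0 \<le> 1 / ?w k" using w by simp
    moreover have "0 \<le> ?w k^2 * (cmod (\<psi> k))^2" by simp
    ultimately show ?thesis by linarith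
  qed
  show ?thesis
    by (rule summable_on_comparison_test[OF summable_on_add[OF s1 s2]]) (rule le, simp)
qed

lemma H2_H0_ell2: assumes "H2 \<psi>" shows "ell2 (H0 t \<psi>)"
proof -
  let ?w = "\<lambda>k::int. (1 + (real_of_int k)^2)"
  have le: "(cmod (H0 t \<psi> k))^2 \<le> (2 + 2*t^2)^2 * (?w k^2 * (cmod (\<psi> k))^2)" for k
  proof -
    have a: "(real_of_int k + t)^2 \<le> (2 + 2*t^2) * ?w k"
    proof -
      have "0 \<le> (real_of_int k - t)^2" by simp
      moreover have "0 \<le> t^2 * (real_of_int k)^2" by simp
      ultimately show ?thesis by (simp add: power2_eq_square algebra_simps)
    qed
    have e0: "E k t \<ge> 0" by (simp add: E_def)
    have "cmod (H0 t \<psi> k) = cmod (complex_of_real (E k t)) * cmod (\<psi> k)"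
      unfolding H0_def by (rule norm_mult)
    also have "\<dots> = E k t * cmod (\<psi> k)" using e0 by (simp only: norm_of_real abs_of_nonneg)
    finally have "(cmod (H0 t \<psi> k))^2 = (E k t)^2 * (cmod (\<psi> k))^2"
      by (simp only: power_mult_distrib)
    then have "(cmod (H0 t \<psi> k))^2 = ((real_of_int k + t)^2)^2 * (cmod (\<psi> k))^2"
      by (simp only: E_def)
    also have "\<dots> \<le> ((2 + 2*t^2) * ?w k)^2 * (cmod (\<psi> k))^2"
      by (intro mult_right_mono power_mono a) auto
    finally show ?thesis by (simp add: power_mult_distrib)
  qed
  have s: "(\<lambda>k. (2 + 2*t^2)^2 * (?w k^2 * (cmod (\<psi> k))^2)) summable_on UNIV"
    using assms by (intro summable_on_cmult_right) (simp add: H2_def)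
  show ?thesis unfolding ell2_def
    by (rule summable_on_comparison_test[OF s]) (rule le, simp)
qed

lemma l2norm_sq: "(l2norm v)^2 = (\<Sum>\<^sub>\<infinity>k. (cmod (v k))^2)"
  unfolding l2norm_def by (simp add: infsum_nonneg)

lemma conv_ell2:
  assumes v: "ell2 v" and x: "(\<lambda>j. cmod (x j)) summable_on UNIV"
  shows "ell2 (\<lambda>m. \<Sum>\<^sub>\<infinity>j. v (m - j) * x j)"
proof -
  define N where "N = l2norm v"
  define X where "X = (\<Sum>\<^sub>\<infinity>j. cmod (x j))"
  define A where "A m = (\<Sum>\<^sub>\<infinity>j. (cmod (v (m - j)))^2 * cmod (x j))" for m
  have N0: "N \<ge> 0" unfolding N_def by (rule l2norm_nonneg)
  have X0: "X \<ge> 0" unfolding X_def by (simp add: infsum_nonneg)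
  have vb: "cmod (v k) \<le> N" for k unfolding N_def by (rule ell2_pointwise[OF v])
  have vb2: "(cmod (v k))^2 \<le> N^2" for k using vb by (simp add: power_mono)
  have sNx: "(\<lambda>j. N * cmod (x j)) summable_on UNIV" using x by (rule summable_on_cmult_right)
  have sN2x: "(\<lambda>j. N^2 * cmod (x j)) summable_on UNIV" using x by (rule summable_on_cmult_right)
  have sabs: "(\<lambda>j. cmod (v (m - j) * x j)) summable_on UNIV" for m
  proof (rule summable_on_comparison_test[OF sNx])
    fix j show "cmod (v (m - j) * x j) \<le> N * cmod (x j)"
      by (simp add: norm_mult mult_right_mono vb)
  qed simp
  have sA: "(\<lambda>j. (cmod (v (m - j)))^2 * cmod (x j)) summable_on UNIV" for m
  proof (rule summable_on_comparison_test[OF sN2x])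
    fix j show "(cmod (v (m - j)))^2 * cmod (x j) \<le> N^2 * cmod (x j)"
      by (simp add: mult_right_mono vb2)
  qed simp
  have A0: "A m \<ge> 0" for m unfolding A_def by (simp add: infsum_nonneg)
  have pt: "(cmod (\<Sum>\<^sub>\<infinity>j. v (m - j) * x j))^2 \<le> X * A m" for m
  proof -
    have S: "(\<Sum>\<^sub>\<infinity>j. cmod (v (m - j) * x j)) \<le> sqrt (A m) * sqrt X"
    proof (rule cs_aux[OF A0 X0])
      fix e :: real assume e: "e > 0"
      have p: "cmod (v (m - j) * x j) \<le> (e/2) * ((cmod (v (m - j)))^2 * cmod (x j)) + (1/(2*e)) * cmod (x j)" for j
      proof -
        have "0 \<le> (e * cmod (v (m - j)) - 1)^2" by simp
        then have "2 * e * cmod (v (m - j)) \<le> e^2 * (cmod (v (m - j)))^2 + 1"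
          by (simp add: power2_eq_square algebra_simps)
        then have "2 * cmod (v (m - j)) \<le> e * (cmod (v (m - j)))^2 + 1/e"
          using e by (simp add: field_simps power2_eq_square)
        then have "2 * cmod (v (m - j)) * cmod (x j) \<le> (e * (cmod (v (m - j)))^2 + 1/e) * cmod (x j)"
          by (rule mult_right_mono) simp
        then show ?thesis using e by (simp add: norm_mult field_simps)
      qed
      have s1: "(\<lambda>j. (e/2) * ((cmod (v (m - j)))^2 * cmod (x j))) summable_on UNIV"
        by (rule summable_on_cmult_right[OF sA])
      have s2: "(\<lambda>j. (1/(2*e)) * cmod (x j)) summable_on UNIV"
        by (rule summable_on_cmult_right[OF x])
      have "(\<Sum>\<^sub>\<infinity>j. cmod (v (m - j) * x j)) \<le> (\<Sum>\<^sub>\<infinity>j. (e/2) * ((cmod (v (m - j)))^2 * cmod (x j)) + (1/(2*e)) * cmod (x j))"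
        by (rule infsum_mono[OF sabs summable_on_add[OF s1 s2] p])
      also have "\<dots> = (\<Sum>\<^sub>\<infinity>j. (e/2) * ((cmod (v (m - j)))^2 * cmod (x j))) + (\<Sum>\<^sub>\<infinity>j. (1/(2*e)) * cmod (x j))"
        by (rule infsum_add[OF s1 s2])
      also have "\<dots> = (e/2) * A m + (1/(2*e)) * X"
        unfolding A_def X_def by (simp only: infsum_cmult_right')
      also have "\<dots> = (e * A m + X / e) / 2" by (simp add: field_simps)
      finally show "(\<Sum>\<^sub>\<infinity>j. cmod (v (m - j) * x j)) \<le> (e * A m + X / e) / 2" .
    qed
    have "cmod (\<Sum>\<^sub>\<infinity>j. v (m - j) * x j) \<le> (\<Sum>\<^sub>\<infinity>j. cmod (v (m - j) * x j))"
      by (rule norm_infsum_bound) (use sabs[of m] in simp)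
    also note S
    finally have "cmod (\<Sum>\<^sub>\<infinity>j. v (m - j) * x j) \<le> sqrt (A m) * sqrt X" .
    then have "(cmod (\<Sum>\<^sub>\<infinity>j. v (m - j) * x j))^2 \<le> (sqrt (A m) * sqrt X)^2"
      by (rule power_mono) simp
    also have "\<dots> = A m * X" using A0 X0 by (simp add: power_mult_distrib)
    finally show ?thesis by (simp add: mult.commute)
  qed
  have sumA: "A summable_on UNIV"
  proof (rule nonneg_bdd_above_summable_on)
    show "0 \<le> A m" for m by (rule A0)
    show "bdd_above (sum A ` {F. F \<subseteq> UNIV \<and> finite F})"
    proof (rule bdd_aboveI[where M="N^2 * X"])
      fix y assume "y \<in> sum A ` {F. F \<subseteq> UNIV \<and> finite F}"
      then obtain F where F: "finite F" and y: "y = sum A F" by auto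
      have fs: "(\<lambda>j. \<Sum>m\<in>F. (cmod (v (m - j)))^2 * cmod (x j)) summable_on UNIV \<and>
          (\<Sum>\<^sub>\<infinity>j. \<Sum>m\<in>F. (cmod (v (m - j)))^2 * cmod (x j)) = (\<Sum>m\<in>F. \<Sum>\<^sub>\<infinity>j. (cmod (v (m - j)))^2 * cmod (x j))"
        by (rule infsum_finite_sum[OF F]) (rule sA)
      have bnd: "(\<Sum>m\<in>F. (cmod (v (m - j)))^2) \<le> N^2" for j
      proof -
        have inj: "inj_on (\<lambda>m. m - j) F" by (auto simp: inj_on_def)
        have "(\<Sum>m\<in>F. (cmod (v (m - j)))^2) = (\<Sum>k\<in>(\<lambda>m. m - j) ` F. (cmod (v k))^2)"
          by (simp add: sum.reindex[OF inj])
        also have "\<dots> \<le> (\<Sum>\<^sub>\<infinity>k. (cmod (v k))^2)"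
          using v F unfolding ell2_def by (intro finite_sum_le_infsum) simp_all
        also have "\<dots> = N^2" unfolding N_def by (simp add: l2norm_sq)
        finally show ?thesis .
      qed
      have "y = (\<Sum>\<^sub>\<infinity>j. \<Sum>m\<in>F. (cmod (v (m - j)))^2 * cmod (x j))"
        using fs y unfolding A_def by simp
      also have "\<dots> \<le> (\<Sum>\<^sub>\<infinity>j. N^2 * cmod (x j))"
      proof (rule infsum_mono[OF conjunct1[OF fs] sN2x])
        fix j
        have "(\<Sum>m\<in>F. (cmod (v (m - j)))^2 * cmod (x j)) = (\<Sum>m\<in>F. (cmod (v (m - j)))^2) * cmod (x j)"
          by (simp add: sum_distrib_right)
        also have "\<dots> \<le> N^2 * cmod (x j)" by (rule mult_right_mono[OF bnd]) simp
        finally show "(\<Sum>m\<in>F. (cmod (v (m - j)))^2 * cmod (x j)) \<le> N^2 * cmod (x j)" .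
      qed
      also have "\<dots> = N^2 * X" unfolding X_def by (rule infsum_cmult_right')
      finally show "y \<le> N^2 * X" .
    qed
  qed
  have "(\<lambda>m. X * A m) summable_on UNIV" using sumA by (rule summable_on_cmult_right)
  then show ?thesis unfolding ell2_def
    by (rule summable_on_comparison_test) (use pt in simp_all)
qed

lemma infsum_diff_c:
  fixes f g :: "'a \<Rightarrow> complex"
  assumes "f summable_on A" "g summable_on A"
  shows "(\<Sum>\<^sub>\<infinity>x\<in>A. f x - g x) = infsum f A - infsum g A"
proof -
  have "(\<lambda>x. - g x) summable_on A" using assms(2) by (simp add: summable_on_uminus)
  then have "(\<Sum>\<^sub>\<infinity>x\<in>A. f x + - g x) = infsum f A + (\<Sum>\<^sub>\<infinity>x\<in>A. - g x)"
    using assms(1) by (intro infsum_add) 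
  then show ?thesis by (simp add: infsum_uminus)
qed

lemma summable_diff_c:
  fixes f g :: "'a \<Rightarrow> complex"
  assumes "f summable_on A" "g summable_on A"
  shows "(\<lambda>x. f x - g x) summable_on A"
  using summable_on_add[OF assms(1) summable_on_uminus[THEN iffD2, OF assms(2)]] by simp

lemma l2_deriv_limit:
  assumes "l2_has_deriv f D t"
  shows "((\<lambda>s. l2norm (\<lambda>k. (f s k - f t k) / complex_of_real (s - t) - D k)) \<longlongrightarrow> 0) (at t)"
  using assms unfolding l2_has_deriv_def .

lemma pairing_deriv:
  fixes a :: "real \<Rightarrow> state" and a' :: state and w :: "int \<Rightarrow> real"
    and \<phi> :: "real \<Rightarrow> state" and D :: state
  assumes w: "(\<lambda>j. (w j)^2) summable_on UNIV"
    and at: "ell2 (a t)" and a': "ell2 a'"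
    and rem: "\<forall>\<^sub>F s in at t. \<forall>j. cmod (a s j - a t j - complex_of_real (s - t) * a' j) \<le> K * w j * (s - t)^2"
    and \<phi>: "\<And>s. ell2 (\<phi> s)" and B: "\<And>s. l2norm (\<phi> s) \<le> B"
    and D: "ell2 D" and der: "l2_has_deriv \<phi> D t"
  shows "((\<lambda>s. \<Sum>\<^sub>\<infinity>j. a s j * \<phi> s j) has_vector_derivative
            ((\<Sum>\<^sub>\<infinity>j. a' j * \<phi> t j) + (\<Sum>\<^sub>\<infinity>j. a t j * D j))) (at t)"
proof -
  define F where "F s = (\<Sum>\<^sub>\<infinity>j. a s j * \<phi> s j)" for s
  define F' where "F' = (\<Sum>\<^sub>\<infinity>j. a' j * \<phi> t j) + (\<Sum>\<^sub>\<infinity>j. a t j * D j)"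
  define W where "W = sqrt (\<Sum>\<^sub>\<infinity>j. (w j)^2)"
  define q where "q s = (\<lambda>k. (\<phi> s k - \<phi> t k) / complex_of_real (s - t) - D k)" for s
  define Q where "Q s = l2norm (q s)" for s
  have Q: "(Q \<longlongrightarrow> 0) (at t)" using der unfolding Q_def q_def l2_has_deriv_def .
  have W0: "W \<ge> 0" unfolding W_def by (simp add: infsum_nonneg)
  have B0: "B \<ge> 0" using B[of t] l2norm_nonneg[of "\<phi> t"] by linarith
  define g where "g s = \<bar>K\<bar> * W * B * \<bar>s - t\<bar> + \<bar>s - t\<bar> * (l2norm a' * Q s + l2norm a' * l2norm D) + l2norm (a t) * Q s" for s
  have g: "(g \<longlongrightarrow> 0) (at t)"
  proof -
    have d: "((\<lambda>s. \<bar>s - t\<bar>) \<longlongrightarrow> 0) (at t)"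
    proof -
      have "((\<lambda>s. s - t) \<longlongrightarrow> t - t) (at t)" by (intro tendsto_intros)
      then have "((\<lambda>s. \<bar>s - t\<bar>) \<longlongrightarrow> \<bar>t - t\<bar>) (at t)" by (rule tendsto_rabs)
      then show ?thesis by simp
    qed
    have "(g \<longlongrightarrow> \<bar>K\<bar> * W * B * 0 + 0 * (l2norm a' * 0 + l2norm a' * l2norm D) + l2norm (a t) * 0) (at t)"
      unfolding g_def by (intro tendsto_intros d Q)
    then show ?thesis by simp
  qed
  have ev: "\<forall>\<^sub>F s in at t. norm (norm (F s - F t - (s - t) *\<^sub>R F') / norm (s - t)) \<le> g s"
    using rem eventually_neq_at_within[of t t UNIV]
  proof eventually_elim
    case (elim s)
    then have st: "s \<noteq> t" and remj: "\<And>j. cmod (a s j - a t j - complex_of_real (s - t) * a' j) \<le> K * w j * (s - t)^2"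
      by auto
    define \<rho> where "\<rho> j = a s j - a t j - complex_of_real (s - t) * a' j" for j
    have \<rho>: "ell2 \<rho>" "l2norm \<rho> \<le> \<bar>K * (s - t)^2\<bar> * W"
      using ell2_weight[OF w, of \<rho> "K * (s - t)^2"] remj unfolding \<rho>_def W_def
      by (simp_all add: mult_ac)
    have as: "ell2 (a s)"
    proof -
      have "a s = (\<lambda>j. \<rho> j + (a t j + complex_of_real (s - t) * a' j))" unfolding \<rho>_def by auto
      moreover have "ell2 (\<lambda>j. \<rho> j + (a t j + complex_of_real (s - t) * a' j))"
        by (intro ell2_add \<rho>(1) at ell2_scale a')
      ultimately show ?thesis by simp
    qed
    have qs: "ell2 (q s)" unfolding q_def
      by (intro ell2_diff D) (simp add: divide_inverse mult.commute[of _ "inverse _"] ell2_scale ell2_diff \<phi>)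
    let ?T1 = "\<lambda>j. \<rho> j * \<phi> s j"
    let ?T2 = "\<lambda>j. complex_of_real ((s - t)^2) * (a' j * (q s j + D j))"
    let ?T3 = "\<lambda>j. complex_of_real (s - t) * (a t j * q s j)"
    have pt: "a s j * \<phi> s j - a t j * \<phi> t j - complex_of_real (s - t) * (a' j * \<phi> t j + a t j * D j)
            = ?T1 j + ?T2 j + ?T3 j" for j
    proof -
      have "complex_of_real (s - t) \<noteq> 0" using st by simp
      then have "\<phi> s j - \<phi> t j = complex_of_real (s - t) * (q s j + D j)" unfolding q_def by simp
      then have e: "\<phi> s j = \<phi> t j + complex_of_real (s - t) * (q s j + D j)" by (simp add: algebra_simps)
      show ?thesis unfolding \<rho>_def e by (simp add: algebra_simps power2_eq_square)
    qed
    have s1: "(\<lambda>j. a s j * \<phi> s j) summable_on UNIV" by (rule ell2_prod[OF as \<phi>])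
    have s2: "(\<lambda>j. a t j * \<phi> t j) summable_on UNIV" by (rule ell2_prod[OF at \<phi>])
    have s3: "(\<lambda>j. a' j * \<phi> t j) summable_on UNIV" by (rule ell2_prod[OF a' \<phi>])
    have s4: "(\<lambda>j. a t j * D j) summable_on UNIV" by (rule ell2_prod[OF at D])
    have sT1: "?T1 summable_on UNIV" by (rule ell2_prod[OF \<rho>(1) \<phi>])
    have sa'q: "(\<lambda>j. a' j * q s j) summable_on UNIV" by (rule ell2_prod[OF a' qs])
    have sa'D: "(\<lambda>j. a' j * D j) summable_on UNIV" by (rule ell2_prod[OF a' D])
    have saq: "(\<lambda>j. a t j * q s j) summable_on UNIV" by (rule ell2_prod[OF at qs])
    have sa'qD: "(\<lambda>j. a' j * (q s j + D j)) summable_on UNIV"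
      using summable_on_add[OF sa'q sa'D] by (simp add: algebra_simps)
    have sT2: "?T2 summable_on UNIV" by (rule summable_on_cmult_right[OF sa'qD])
    have sT3: "?T3 summable_on UNIV" by (rule summable_on_cmult_right[OF saq])
    have "F s - F t - (s - t) *\<^sub>R F' = (\<Sum>\<^sub>\<infinity>j. a s j * \<phi> s j - a t j * \<phi> t j - complex_of_real (s - t) * (a' j * \<phi> t j + a t j * D j))"
    proof -
      have e1: "(\<Sum>\<^sub>\<infinity>j. a' j * \<phi> t j + a t j * D j) = (\<Sum>\<^sub>\<infinity>j. a' j * \<phi> t j) + (\<Sum>\<^sub>\<infinity>j. a t j * D j)"
        by (rule infsum_add[OF s3 s4])
      have s34: "(\<lambda>j. complex_of_real (s - t) * (a' j * \<phi> t j + a t j * D j)) summable_on UNIV"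
        by (rule summable_on_cmult_right[OF summable_on_add[OF s3 s4]])
      have "(\<Sum>\<^sub>\<infinity>j. a s j * \<phi> s j - a t j * \<phi> t j - complex_of_real (s - t) * (a' j * \<phi> t j + a t j * D j))
          = (\<Sum>\<^sub>\<infinity>j. a s j * \<phi> s j - a t j * \<phi> t j) - (\<Sum>\<^sub>\<infinity>j. complex_of_real (s - t) * (a' j * \<phi> t j + a t j * D j))"
        by (rule infsum_diff_c[OF summable_diff_c[OF s1 s2] s34])
      also have "\<dots> = F s - F t - complex_of_real (s - t) * F'"
        unfolding F_def F'_def by (simp add: infsum_diff_c[OF s1 s2] infsum_cmult_right' e1)
      finally show ?thesis by (simp add: scaleR_conv_of_real)
    qed
    also have "\<dots> = (\<Sum>\<^sub>\<infinity>j. ?T1 j + ?T2 j + ?T3 j)" by (simp only: pt)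
    also have "\<dots> = (\<Sum>\<^sub>\<infinity>j. ?T1 j + ?T2 j) + (\<Sum>\<^sub>\<infinity>j. ?T3 j)"
      by (rule infsum_add[OF summable_on_add[OF sT1 sT2] sT3])
    also have "\<dots> = (\<Sum>\<^sub>\<infinity>j. ?T1 j) + (\<Sum>\<^sub>\<infinity>j. ?T2 j) + (\<Sum>\<^sub>\<infinity>j. ?T3 j)"
      by (simp only: infsum_add[OF sT1 sT2])
    finally have eq: "F s - F t - (s - t) *\<^sub>R F' = (\<Sum>\<^sub>\<infinity>j. ?T1 j) + (\<Sum>\<^sub>\<infinity>j. ?T2 j) + (\<Sum>\<^sub>\<infinity>j. ?T3 j)" .
    have b1: "cmod (\<Sum>\<^sub>\<infinity>j. ?T1 j) \<le> \<bar>K\<bar> * W * B * (s - t)^2"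
    proof -
      have "cmod (\<Sum>\<^sub>\<infinity>j. ?T1 j) \<le> l2norm \<rho> * l2norm (\<phi> s)" by (rule cauchy_schwarz[OF \<rho>(1) \<phi>])
      also have "\<dots> \<le> (\<bar>K * (s - t)^2\<bar> * W) * B"
        by (intro mult_mono \<rho>(2) B l2norm_nonneg) (simp add: W0)
      finally show ?thesis by (simp add: abs_mult mult_ac)
    qed
    have b2: "cmod (\<Sum>\<^sub>\<infinity>j. ?T2 j) \<le> (s - t)^2 * (l2norm a' * Q s + l2norm a' * l2norm D)"
    proof -
      have i1: "(\<Sum>\<^sub>\<infinity>j. ?T2 j) = complex_of_real ((s - t)^2) * (\<Sum>\<^sub>\<infinity>j. a' j * (q s j + D j))"
        by (rule infsum_cmult_right')
      have i2: "(\<Sum>\<^sub>\<infinity>j. a' j * (q s j + D j)) = (\<Sum>\<^sub>\<infinity>j. a' j * q s j + a' j * D j)"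
        by (simp only: distrib_left)
      have "(\<Sum>\<^sub>\<infinity>j. ?T2 j) = complex_of_real ((s - t)^2) * ((\<Sum>\<^sub>\<infinity>j. a' j * q s j) + (\<Sum>\<^sub>\<infinity>j. a' j * D j))"
        unfolding i1 i2 infsum_add[OF sa'q sa'D] ..
      then have "cmod (\<Sum>\<^sub>\<infinity>j. ?T2 j) = (s - t)^2 * cmod ((\<Sum>\<^sub>\<infinity>j. a' j * q s j) + (\<Sum>\<^sub>\<infinity>j. a' j * D j))"
        by (simp only: norm_mult norm_of_real abs_power2)
      also have "\<dots> \<le> (s - t)^2 * (l2norm a' * Q s + l2norm a' * l2norm D)"
      proof (rule mult_left_mono)
        have "cmod ((\<Sum>\<^sub>\<infinity>j. a' j * q s j) + (\<Sum>\<^sub>\<infinity>j. a' j * D j)) \<le> cmod (\<Sum>\<^sub>\<infinity>j. a' j * q s j) + cmod (\<Sum>\<^sub>\<infinity>j. a' j * D j)"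
          by (rule norm_triangle_ineq)
        also have "\<dots> \<le> l2norm a' * Q s + l2norm a' * l2norm D"
          unfolding Q_def by (intro add_mono cauchy_schwarz a' qs D)
        finally show "cmod ((\<Sum>\<^sub>\<infinity>j. a' j * q s j) + (\<Sum>\<^sub>\<infinity>j. a' j * D j)) \<le> l2norm a' * Q s + l2norm a' * l2norm D" .
      qed simp
      finally show ?thesis .
    qed
    have b3: "cmod (\<Sum>\<^sub>\<infinity>j. ?T3 j) \<le> \<bar>s - t\<bar> * (l2norm (a t) * Q s)"
    proof -
      have "(\<Sum>\<^sub>\<infinity>j. ?T3 j) = complex_of_real (s - t) * (\<Sum>\<^sub>\<infinity>j. a t j * q s j)"
        by (simp add: infsum_cmult_right')
      then have "cmod (\<Sum>\<^sub>\<infinity>j. ?T3 j) = \<bar>s - t\<bar> * cmod (\<Sum>\<^sub>\<infinity>j. a t j * q s j)"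
        by (simp only: norm_mult norm_of_real)
      also have "\<dots> \<le> \<bar>s - t\<bar> * (l2norm (a t) * Q s)"
        unfolding Q_def by (intro mult_left_mono cauchy_schwarz at qs) simp
      finally show ?thesis .
    qed
    have "norm (F s - F t - (s - t) *\<^sub>R F') \<le> \<bar>K\<bar> * W * B * (s - t)^2 + (s - t)^2 * (l2norm a' * Q s + l2norm a' * l2norm D) + \<bar>s - t\<bar> * (l2norm (a t) * Q s)"
      unfolding eq by (rule order_trans[OF norm_triangle_ineq] add_mono b1 b2 b3 order_trans[OF norm_triangle_ineq])+
    also have "\<dots> = \<bar>s - t\<bar> * g s" unfolding g_def
      by (simp add: power2_eq_square algebra_simps abs_mult_self_eq)
    finally have "norm (F s - F t - (s - t) *\<^sub>R F') / \<bar>s - t\<bar> \<le> g s"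
      using st by (simp add: divide_le_eq mult.commute)
    then show ?case by simp
  qed
  have "(F has_derivative (\<lambda>h. h *\<^sub>R F')) (at t)"
    unfolding has_derivative_iff_norm
  proof
    show "bounded_linear (\<lambda>h. h *\<^sub>R F')" by (rule bounded_linear_scaleR_left)
    show "((\<lambda>y. norm (F y - F t - (y - t) *\<^sub>R F') / norm (y - t)) \<longlongrightarrow> 0) (at t)"
      by (rule Lim_null_comparison[OF ev g])
  qed
  then show ?thesis unfolding has_vector_derivative_def F_def F'_def .
qed

definition rr :: "int \<Rightarrow> int \<Rightarrow> real \<Rightarrow> int \<Rightarrow> real" where
  "rr n l t j = (if j = n \<or> j = - n - l then 0 else 1 / (E j t - E n t))"

definition rrd :: "int \<Rightarrow> int \<Rightarrow> real \<Rightarrow> int \<Rightarrow> real" where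
  "rrd n l t j = - 2 * real_of_int (j - n) * (rr n l t j)^2"

definition om :: "int \<Rightarrow> int \<Rightarrow> real" where
  "om n j = 1 / (1 + \<bar>real_of_int (j - n)\<bar>)"

definition gd :: "int \<Rightarrow> real \<Rightarrow> bool" where
  "gd l t \<longleftrightarrow> \<bar>t - real_of_int l / 2\<bar> < 3/8"

lemma Rhat_eq: "Rhat n l t x j = complex_of_real (rr n l t j) * x j"
  by (simp add: Rhat_def rr_def divide_inverse mult.commute)

lemma E_diff: "E j t - E n t = real_of_int (j - n) * (real_of_int (j + n) + 2 * t)"
  by (simp add: E_def power2_eq_square algebra_simps)

lemma gd_far:
  assumes g: "gd l t" and j: "j \<noteq> - n - l"
  shows "\<bar>real_of_int (j + n) + 2 * t\<bar> \<ge> 1/4"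
proof -
  have m: "j + n + l \<noteq> 0" using j by auto
  then have m1: "\<bar>real_of_int (j + n + l)\<bar> \<ge> 1" by linarith
  have d: "\<bar>2 * t - real_of_int l\<bar> < 3/4" using g unfolding gd_def by linarith
  have "real_of_int (j + n) + 2 * t = real_of_int (j + n + l) + (2 * t - real_of_int l)" by simp
  then show ?thesis using m1 d by linarith
qed

lemma gd_Ediff_nz:
  assumes g: "gd l t" and j: "\<not> (j = n \<or> j = - n - l)"
  shows "E j t - E n t \<noteq> 0"
proof -
  have "real_of_int (j - n) \<noteq> 0" using j by simp
  moreover have "real_of_int (j + n) + 2 * t \<noteq> 0" using gd_far[OF g] j by force
  ultimately show ?thesis by (simp add: E_diff)
qed

lemma rr_Ediff: "gd l t \<Longrightarrow> rr n l t j * (E j t - E n t) = (if j = n \<or> j = - n - l then 0 else 1)"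
  using gd_Ediff_nz[of l t j n] by (auto simp: rr_def)

lemma rr_jn:
  assumes g: "gd l t"
  shows "\<bar>real_of_int (j - n) * rr n l t j\<bar> \<le> 4"
proof (cases "j = n \<or> j = - n - l")
  case True then show ?thesis by (simp add: rr_def)
next
  case False
  have dn: "real_of_int (j - n) \<noteq> 0" using False by simp
  have f: "\<bar>real_of_int (j + n) + 2 * t\<bar> \<ge> 1/4" using gd_far[OF g] False by blast
  have "real_of_int (j - n) * rr n l t j = 1 / (real_of_int (j + n) + 2 * t)"
    using False dn by (simp add: rr_def E_diff)
  also have "\<bar>\<dots>\<bar> \<le> 4"
  proof -
    let ?x = "real_of_int (j + n) + 2 * t"
    have p: "\<bar>?x\<bar> > 0" using f by linarith
    have "\<bar>1 / ?x\<bar> = 1 / \<bar>?x\<bar>" by simp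
    also have "\<dots> \<le> 4" using p f by (simp add: divide_le_eq mult.commute)
    finally show ?thesis .
  qed
  finally show ?thesis .
qed

lemma om_pos: "om n j > 0" unfolding om_def by (simp add: add_pos_nonneg)

lemma inv_abs_om: "j \<noteq> n \<Longrightarrow> 1 / \<bar>real_of_int (j - n)\<bar> \<le> 2 * om n j"
proof -
  assume "j \<noteq> n"
  then have d: "\<bar>real_of_int (j - n)\<bar> \<ge> 1" by linarith
  then show ?thesis unfolding om_def by (simp add: field_simps)
qed

lemma rr_om: assumes "gd l t" shows "\<bar>rr n l t j\<bar> \<le> 8 * om n j"
proof (cases "j = n")
  case True then show ?thesis using om_pos[of n j] by (simp add: rr_def)
next
  case False
  have d: "\<bar>real_of_int (j - n)\<bar> > 0" using False by simp
  have "\<bar>rr n l t j\<bar> = \<bar>real_of_int (j - n) * rr n l t j\<bar> * (1 / \<bar>real_of_int (j - n)\<bar>)"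
    using d by (simp add: abs_mult)
  also have "\<dots> \<le> 4 * (2 * om n j)"
    by (intro mult_mono rr_jn[OF assms] inv_abs_om[OF False]) auto
  finally show ?thesis by simp
qed

lemma om_sq_summable: "(\<lambda>j. (om n j)^2) summable_on UNIV"
proof (rule summable_on_comparison_test[OF summable_inv_sq_int_shift[of n]])
  fix j
  have "1 + (real_of_int (j - n))^2 \<le> (1 + \<bar>real_of_int (j - n)\<bar>)^2"
    by (simp add: power2_eq_square algebra_simps)
  then show "(om n j)^2 \<le> 1 / (1 + (real_of_int (j - n))^2)"
    unfolding om_def by (simp add: power_divide frac_le add_pos_nonneg)
qed simp

lemma rr_diff:
  assumes gs: "gd l s" and gt: "gd l t"
  shows "rr n l s j - rr n l t j = - 2 * real_of_int (j - n) * (s - t) * rr n l s j * rr n l t j"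
proof (cases "j = n \<or> j = - n - l")
  case True then show ?thesis by (simp add: rr_def)
next
  case False
  have a: "E j s - E n s \<noteq> 0" by (rule gd_Ediff_nz[OF gs False])
  have b: "E j t - E n t \<noteq> 0" by (rule gd_Ediff_nz[OF gt False])
  have "rr n l s j - rr n l t j = ((E j t - E n t) - (E j s - E n s)) / ((E j s - E n s) * (E j t - E n t))"
    using False a b by (simp add: rr_def field_simps)
  also have "(E j t - E n t) - (E j s - E n s) = - 2 * real_of_int (j - n) * (s - t)"
    by (simp add: E_diff algebra_simps)
  finally show ?thesis using False by (simp add: rr_def)
qed

lemma rr_rem:
  assumes gs: "gd l s" and gt: "gd l t"
  shows "rr n l s j - rr n l t j - (s - t) * rrd n l t j
       = 4 * (real_of_int (j - n) * rr n l t j)^2 * (s - t)^2 * rr n l s j"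
proof -
  let ?d = "real_of_int (j - n)"
  have "rr n l s j - rr n l t j - (s - t) * rrd n l t j
      = (rr n l s j - rr n l t j) + 2 * ?d * (s - t) * (rr n l t j)^2"
    by (simp add: rrd_def algebra_simps)
  also have "\<dots> = - 2 * ?d * (s - t) * rr n l s j * rr n l t j + 2 * ?d * (s - t) * (rr n l t j)^2"
    by (simp only: rr_diff[OF gs gt])
  also have "\<dots> = - 2 * ?d * (s - t) * rr n l t j * (rr n l s j - rr n l t j)"
    by (simp add: algebra_simps power2_eq_square)
  also have "\<dots> = - 2 * ?d * (s - t) * rr n l t j * (- 2 * ?d * (s - t) * rr n l s j * rr n l t j)"
    by (simp only: rr_diff[OF gs gt])
  also have "\<dots> = 4 * (?d * rr n l t j)^2 * (s - t)^2 * rr n l s j"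
    by (simp add: power2_eq_square algebra_simps)
  finally show ?thesis .
qed

lemma rr_rem_bound:
  assumes gs: "gd l s" and gt: "gd l t"
  shows "\<bar>rr n l s j - rr n l t j - (s - t) * rrd n l t j\<bar> \<le> 512 * om n j * (s - t)^2"
proof -
  have a: "(real_of_int (j - n) * rr n l t j)^2 \<le> 16"
  proof -
    have "(real_of_int (j - n) * rr n l t j)^2 = \<bar>real_of_int (j - n) * rr n l t j\<bar>^2" by simp
    also have "\<dots> \<le> 4^2" by (rule power_mono[OF rr_jn[OF gt]]) simp
    finally show ?thesis by simp
  qed
  have "\<bar>rr n l s j - rr n l t j - (s - t) * rrd n l t j\<bar>
      = 4 * (real_of_int (j - n) * rr n l t j)^2 * (s - t)^2 * \<bar>rr n l s j\<bar>"
    unfolding rr_rem[OF gs gt] by (simp add: abs_mult)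
  also have "\<dots> \<le> 4 * 16 * (s - t)^2 * (8 * om n j)"
    by (intro mult_mono rr_om[OF gs] a) auto
  finally show ?thesis by (simp add: mult_ac)
qed

lemma rr_diff_bound:
  assumes gs: "gd l s" and gt: "gd l t"
  shows "\<bar>rr n l s j - rr n l t j\<bar> \<le> 64 * om n j * \<bar>s - t\<bar>"
proof -
  have "rr n l s j - rr n l t j = (- 2) * (real_of_int (j - n) * rr n l t j) * (s - t) * rr n l s j"
    unfolding rr_diff[OF gs gt] by (simp only: mult_ac)
  then have "\<bar>rr n l s j - rr n l t j\<bar> = 2 * \<bar>real_of_int (j - n) * rr n l t j\<bar> * \<bar>s - t\<bar> * \<bar>rr n l s j\<bar>"
    by (simp only: abs_mult abs_neg_numeral abs_numeral)
  also have "\<dots> \<le> 2 * 4 * \<bar>s - t\<bar> * (8 * om n j)"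
    by (intro mult_mono rr_jn[OF gt] rr_om[OF gs]) auto
  finally show ?thesis by (simp add: mult_ac)
qed

lemma rrd_bound:
  assumes gt: "gd l t"
  shows "\<bar>rrd n l t j\<bar> \<le> 64 * om n j"
proof -
  have "rrd n l t j = (- 2) * (real_of_int (j - n) * rr n l t j) * rr n l t j"
    unfolding rrd_def by (simp only: power2_eq_square mult.assoc)
  then have "\<bar>rrd n l t j\<bar> = 2 * \<bar>real_of_int (j - n) * rr n l t j\<bar> * \<bar>rr n l t j\<bar>"
    by (simp only: abs_mult abs_neg_numeral abs_numeral)
  also have "\<dots> \<le> 2 * 4 * (8 * om n j)"
    by (intro mult_mono rr_jn[OF gt] rr_om[OF gt]) auto
  finally show ?thesis by simp
qed

definition c0 :: complex where "c0 = complex_of_real (1 / sqrt (2*pi))"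
definition C0 :: real where "C0 = 1 / sqrt (2*pi)"

lemma cmod_c0: "cmod c0 = C0" unfolding c0_def C0_def norm_of_real by simp
lemma C0_nonneg: "C0 \<ge> 0" unfolding C0_def by simp

definition alpha :: "(real \<Rightarrow> real) \<Rightarrow> int \<Rightarrow> int \<Rightarrow> real \<Rightarrow> state" where
  "alpha V n l s j = c0 * Vhat V (n - j) * complex_of_real (rr n l s j)"
definition alphad :: "(real \<Rightarrow> real) \<Rightarrow> int \<Rightarrow> int \<Rightarrow> real \<Rightarrow> state" where
  "alphad V n l t j = c0 * Vhat V (n - j) * complex_of_real (rrd n l t j)"
definition gam :: "(real \<Rightarrow> real) \<Rightarrow> int \<Rightarrow> int \<Rightarrow> real \<Rightarrow> state" where
  "gam V n l s j = c0 * (\<Sum>\<^sub>\<infinity>k. alpha V n l s k * Vhat V (k - j))"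
definition gamd :: "(real \<Rightarrow> real) \<Rightarrow> int \<Rightarrow> int \<Rightarrow> real \<Rightarrow> state" where
  "gamd V n l t j = c0 * (\<Sum>\<^sub>\<infinity>k. alphad V n l t k * Vhat V (k - j))"
definition beta :: "(real \<Rightarrow> real) \<Rightarrow> int \<Rightarrow> int \<Rightarrow> real \<Rightarrow> state" where
  "beta V n l s j = complex_of_real (rr n l s j) * gam V n l s j"
definition betad :: "(real \<Rightarrow> real) \<Rightarrow> int \<Rightarrow> int \<Rightarrow> real \<Rightarrow> state" where
  "betad V n l t j = complex_of_real (rrd n l t j) * gam V n l t j + complex_of_real (rr n l t j) * gamd V n l t j"

definition WW :: "int \<Rightarrow> real" where "WW n = sqrt (\<Sum>\<^sub>\<infinity>j. (om n j)^2)"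

lemma WW_nonneg: "WW n \<ge> 0" unfolding WW_def by (simp add: infsum_nonneg)

lemma om_bound_ell2:
  assumes "\<And>k. cmod (a k) \<le> C * om n k"
  shows "ell2 a" "l2norm a \<le> \<bar>C\<bar> * WW n"
  using ell2_weight[OF om_sq_summable assms] unfolding WW_def by auto

lemma om_pair_bound:
  assumes "\<And>k. cmod (a k) \<le> C * om n k" and b: "ell2 b"
  shows "cmod (\<Sum>\<^sub>\<infinity>k. a k * b k) \<le> \<bar>C\<bar> * WW n * l2norm b"
proof -
  have "cmod (\<Sum>\<^sub>\<infinity>k. a k * b k) \<le> l2norm a * l2norm b" by (rule cauchy_schwarz[OF om_bound_ell2(1)[OF assms(1)] b])
  also have "\<dots> \<le> \<bar>C\<bar> * WW n * l2norm b" by (intro mult_right_mono om_bound_ell2(2)[OF assms(1)] l2norm_nonneg)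
  finally show ?thesis .
qed

context
  fixes V :: "real \<Rightarrow> real" and n l :: int
  assumes v: "ell2 (Vhat V)"
begin

abbreviation "NV \<equiv> l2norm (Vhat V)"

lemma NV_nonneg: "NV \<ge> 0" by (rule l2norm_nonneg)

lemma vb: "cmod (Vhat V k) \<le> NV" by (rule ell2_pointwise[OF v])

lemma cvr_bound: "cmod (c0 * Vhat V (n - j) * complex_of_real x) \<le> C0 * NV * \<bar>x\<bar>"
proof -
  have "cmod (c0 * Vhat V (n - j) * complex_of_real x) = C0 * cmod (Vhat V (n - j)) * \<bar>x\<bar>"
    by (simp add: norm_mult cmod_c0)
  also have "\<dots> \<le> C0 * NV * \<bar>x\<bar>"
    by (intro mult_right_mono mult_left_mono vb C0_nonneg) simp_all
  finally show ?thesis .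
qed

lemma cvr_bound2: "\<bar>x\<bar> \<le> B \<Longrightarrow> cmod (c0 * Vhat V (n - j) * complex_of_real x) \<le> C0 * NV * B"
proof -
  assume "\<bar>x\<bar> \<le> B"
  then have "C0 * NV * \<bar>x\<bar> \<le> C0 * NV * B"
    by (rule mult_left_mono) (simp add: C0_nonneg NV_nonneg)
  then show ?thesis using cvr_bound[of j x] by linarith
qed

lemma alpha_bound: "gd l s \<Longrightarrow> cmod (alpha V n l s j) \<le> (C0 * NV * 8) * om n j"
  unfolding alpha_def using cvr_bound2[OF rr_om[of l s n j]] by (simp add: mult_ac)

lemma alphad_bound: "gd l t \<Longrightarrow> cmod (alphad V n l t j) \<le> (C0 * NV * 64) * om n j"
  unfolding alphad_def using cvr_bound2[OF rrd_bound[of l t n j]] by (simp add: mult_ac)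

lemma alpha_rem_eq: "alpha V n l s j - alpha V n l t j - complex_of_real (s - t) * alphad V n l t j
   = c0 * Vhat V (n - j) * complex_of_real (rr n l s j - rr n l t j - (s - t) * rrd n l t j)"
  unfolding alpha_def alphad_def by (simp add: algebra_simps)

lemma alpha_rem: "gd l s \<Longrightarrow> gd l t \<Longrightarrow>
  cmod (alpha V n l s j - alpha V n l t j - complex_of_real (s - t) * alphad V n l t j) \<le> (C0 * NV * 512) * om n j * (s - t)^2"
  unfolding alpha_rem_eq using cvr_bound2[OF rr_rem_bound[of l s t n j]] by (simp add: mult_ac)

lemma alpha_diff: "gd l s \<Longrightarrow> gd l t \<Longrightarrow>
  cmod (alpha V n l s j - alpha V n l t j) \<le> (C0 * NV * 64 * \<bar>s - t\<bar>) * om n j"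
proof -
  assume gs: "gd l s" and gt: "gd l t"
  have "alpha V n l s j - alpha V n l t j = c0 * Vhat V (n - j) * complex_of_real (rr n l s j - rr n l t j)"
    unfolding alpha_def by (simp add: algebra_simps)
  then show ?thesis using cvr_bound2[OF rr_diff_bound[OF gs gt, of n j]] by (simp add: mult_ac)
qed

lemma alpha_ell2: "gd l s \<Longrightarrow> ell2 (alpha V n l s)"
  by (rule om_bound_ell2(1)[OF alpha_bound])
lemma alphad_ell2: "gd l s \<Longrightarrow> ell2 (alphad V n l s)"
  by (rule om_bound_ell2(1)[OF alphad_bound])

lemma vshift: "ell2 (\<lambda>k. Vhat V (k - j))" "l2norm (\<lambda>k. Vhat V (k - j)) = NV"
  using ell2_shift2[OF v] l2norm_shift2 by auto

lemma gam_bound: "gd l s \<Longrightarrow> cmod (gam V n l s j) \<le> C0 * ((C0 * NV * 8) * WW n * NV)"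
proof -
  assume g: "gd l s"
  have "cmod (\<Sum>\<^sub>\<infinity>k. alpha V n l s k * Vhat V (k - j)) \<le> \<bar>C0 * NV * 8\<bar> * WW n * NV"
    using om_pair_bound[OF alpha_bound[OF g] vshift(1)] vshift(2) by simp
  then show ?thesis unfolding gam_def using C0_nonneg NV_nonneg
    by (simp add: norm_mult cmod_c0 mult_left_mono)
qed

lemma gamd_bound: "gd l t \<Longrightarrow> cmod (gamd V n l t j) \<le> C0 * ((C0 * NV * 64) * WW n * NV)"
proof -
  assume g: "gd l t"
  have "cmod (\<Sum>\<^sub>\<infinity>k. alphad V n l t k * Vhat V (k - j)) \<le> \<bar>C0 * NV * 64\<bar> * WW n * NV"
    using om_pair_bound[OF alphad_bound[OF g] vshift(1)] vshift(2) by simp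
  then show ?thesis unfolding gamd_def using C0_nonneg NV_nonneg
    by (simp add: norm_mult cmod_c0 mult_left_mono)
qed

lemma gam_diff: "gd l s \<Longrightarrow> gd l t \<Longrightarrow>
   cmod (gam V n l s j - gam V n l t j) \<le> C0 * ((C0 * NV * 64) * WW n * NV) * \<bar>s - t\<bar>"
proof -
  assume gs: "gd l s" and gt: "gd l t"
  have s1: "(\<lambda>k. alpha V n l s k * Vhat V (k - j)) summable_on UNIV" by (rule ell2_prod[OF alpha_ell2[OF gs] vshift(1)])
  have s2: "(\<lambda>k. alpha V n l t k * Vhat V (k - j)) summable_on UNIV" by (rule ell2_prod[OF alpha_ell2[OF gt] vshift(1)])
  have "(\<Sum>\<^sub>\<infinity>k. (alpha V n l s k - alpha V n l t k) * Vhat V (k - j))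
      = (\<Sum>\<^sub>\<infinity>k. alpha V n l s k * Vhat V (k - j) - alpha V n l t k * Vhat V (k - j))"
    by (simp only: left_diff_distrib)
  also have "\<dots> = (\<Sum>\<^sub>\<infinity>k. alpha V n l s k * Vhat V (k - j)) - (\<Sum>\<^sub>\<infinity>k. alpha V n l t k * Vhat V (k - j))"
    by (rule infsum_diff_c[OF s1 s2])
  finally have "gam V n l s j - gam V n l t j = c0 * (\<Sum>\<^sub>\<infinity>k. (alpha V n l s k - alpha V n l t k) * Vhat V (k - j))"
    unfolding gam_def by (simp only: right_diff_distrib)
  moreover have "cmod (\<Sum>\<^sub>\<infinity>k. (alpha V n l s k - alpha V n l t k) * Vhat V (k - j)) \<le> \<bar>C0 * NV * 64 * \<bar>s - t\<bar>\<bar> * WW n * NV"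
    using om_pair_bound[OF alpha_diff[OF gs gt] vshift(1)] vshift(2) by simp
  ultimately show ?thesis using C0_nonneg NV_nonneg
    by (simp add: norm_mult cmod_c0 mult_left_mono abs_mult mult_ac)
qed

lemma gam_rem: "gd l s \<Longrightarrow> gd l t \<Longrightarrow>
   cmod (gam V n l s j - gam V n l t j - complex_of_real (s - t) * gamd V n l t j) \<le> C0 * ((C0 * NV * 512) * WW n * NV) * (s - t)^2"
proof -
  assume gs: "gd l s" and gt: "gd l t"
  have s1: "(\<lambda>k. alpha V n l s k * Vhat V (k - j)) summable_on UNIV" by (rule ell2_prod[OF alpha_ell2[OF gs] vshift(1)])
  have s2: "(\<lambda>k. alpha V n l t k * Vhat V (k - j)) summable_on UNIV" by (rule ell2_prod[OF alpha_ell2[OF gt] vshift(1)])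
  have s3: "(\<lambda>k. complex_of_real (s - t) * (alphad V n l t k * Vhat V (k - j))) summable_on UNIV"
    by (rule summable_on_cmult_right[OF ell2_prod[OF alphad_ell2[OF gt] vshift(1)]])
  have "(\<Sum>\<^sub>\<infinity>k. (alpha V n l s k - alpha V n l t k - complex_of_real (s - t) * alphad V n l t k) * Vhat V (k - j))
      = (\<Sum>\<^sub>\<infinity>k. alpha V n l s k * Vhat V (k - j) - alpha V n l t k * Vhat V (k - j) - complex_of_real (s - t) * (alphad V n l t k * Vhat V (k - j)))"
    by (simp only: left_diff_distrib mult.assoc)
  also have "\<dots> = (\<Sum>\<^sub>\<infinity>k. alpha V n l s k * Vhat V (k - j) - alpha V n l t k * Vhat V (k - j))
        - (\<Sum>\<^sub>\<infinity>k. complex_of_real (s - t) * (alphad V n l t k * Vhat V (k - j)))"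
    by (rule infsum_diff_c[OF summable_diff_c[OF s1 s2] s3])
  also have "\<dots> = (\<Sum>\<^sub>\<infinity>k. alpha V n l s k * Vhat V (k - j)) - (\<Sum>\<^sub>\<infinity>k. alpha V n l t k * Vhat V (k - j))
        - complex_of_real (s - t) * (\<Sum>\<^sub>\<infinity>k. alphad V n l t k * Vhat V (k - j))"
    by (simp only: infsum_diff_c[OF s1 s2] infsum_cmult_right')
  finally have "gam V n l s j - gam V n l t j - complex_of_real (s - t) * gamd V n l t j
     = c0 * (\<Sum>\<^sub>\<infinity>k. (alpha V n l s k - alpha V n l t k - complex_of_real (s - t) * alphad V n l t k) * Vhat V (k - j))"
    unfolding gam_def gamd_def by (simp only: right_diff_distrib mult.left_commute[of c0])
  moreover have "cmod (\<Sum>\<^sub>\<infinity>k. (alpha V n l s k - alpha V n l t k - complex_of_real (s - t) * alphad V n l t k) * Vhat V (k - j))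
      \<le> \<bar>C0 * NV * 512 * (s - t)^2\<bar> * WW n * NV"
  proof -
    have b: "cmod (alpha V n l s k - alpha V n l t k - complex_of_real (s - t) * alphad V n l t k) \<le> (C0 * NV * 512 * (s - t)^2) * om n k" for k
      using alpha_rem[OF gs gt, of k] by (simp add: mult_ac)
    show ?thesis using om_pair_bound[OF b vshift(1)] vshift(2) by simp
  qed
  ultimately show ?thesis using C0_nonneg NV_nonneg
    by (simp add: norm_mult cmod_c0 mult_left_mono abs_mult mult_ac)
qed

end

lemma T1_repr: "T1 V n l s x n = (\<Sum>\<^sub>\<infinity>j. alpha V n l s j * x j)"
proof -
  have "T1 V n l s x n = c0 * (\<Sum>\<^sub>\<infinity>j. Vhat V (n - j) * (complex_of_real (rr n l s j) * x j))"
    unfolding T1_def Pm_def Vop_def Rhat_eq c0_def by simp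
  also have "\<dots> = (\<Sum>\<^sub>\<infinity>j. c0 * (Vhat V (n - j) * (complex_of_real (rr n l s j) * x j)))"
    by (rule infsum_cmult_right'[symmetric])
  also have "\<dots> = (\<Sum>\<^sub>\<infinity>j. alpha V n l s j * x j)"
    unfolding alpha_def by (simp only: mult.assoc)
  finally show ?thesis .
qed

lemma T2_T1: "T2 V n l s x = T1 V n l s (Vop V (Rhat n l s x))"
  unfolding T2_def T1_def ..

lemma T1_other: "m \<noteq> n \<Longrightarrow> T1 V n l s x m = 0"
  unfolding T1_def Pm_def by simp

lemma T2_other: "m \<noteq> n \<Longrightarrow> T2 V n l s x m = 0"
  unfolding T2_def Pm_def by simp

lemma beta_rem_alg:
  fixes rs rt rd gs gt gd h :: complex
  shows "rs*gs - rt*gt - h*(rd*gt + rt*gd) = (rs - rt - h*rd)*gt + rt*(gs - gt - h*gd) + (rs - rt)*(gs - gt)"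
  by (simp add: algebra_simps)

lemma beta_rem_alg2:
  fixes a b c w h :: real
  shows "512*w*h*a + 8*w*(b*h) + 64*w*c*h = (512*a + 8*b + 64*c)*w*h"
  by (simp add: algebra_simps)

context
  fixes V :: "real \<Rightarrow> real" and n l :: int
  assumes v: "ell2 (Vhat V)"
begin

abbreviation "Gm \<equiv> C0 * ((C0 * NV V * 8) * WW n * NV V)"
abbreviation "Gd \<equiv> C0 * ((C0 * NV V * 64) * WW n * NV V)"
abbreviation "Gr \<equiv> C0 * ((C0 * NV V * 512) * WW n * NV V)"

lemma beta_bound: "gd l s \<Longrightarrow> cmod (beta V n l s j) \<le> (8 * Gm) * om n j"
proof -
  assume g: "gd l s"
  have "cmod (beta V n l s j) = \<bar>rr n l s j\<bar> * cmod (gam V n l s j)"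
    unfolding beta_def by (simp add: norm_mult)
  also have "\<dots> \<le> (8 * om n j) * Gm"
    by (intro mult_mono rr_om[OF g] gam_bound[OF v g]) (auto simp: om_pos less_imp_le)
  finally show ?thesis by (simp add: mult_ac)
qed

lemma betad_bound: "gd l t \<Longrightarrow> cmod (betad V n l t j) \<le> (64 * Gm + 8 * Gd) * om n j"
proof -
  assume g: "gd l t"
  have "cmod (betad V n l t j) \<le> cmod (complex_of_real (rrd n l t j) * gam V n l t j) + cmod (complex_of_real (rr n l t j) * gamd V n l t j)"
    unfolding betad_def by (rule norm_triangle_ineq)
  also have "\<dots> = \<bar>rrd n l t j\<bar> * cmod (gam V n l t j) + \<bar>rr n l t j\<bar> * cmod (gamd V n l t j)"
    by (simp only: norm_mult norm_of_real)
  also have "\<dots> \<le> (64 * om n j) * Gm + (8 * om n j) * Gd"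
    by (intro add_mono mult_mono rrd_bound[OF g] gam_bound[OF v g] rr_om[OF g] gamd_bound[OF v g])
      (auto simp: om_pos less_imp_le)
  finally show ?thesis by (simp add: algebra_simps)
qed

lemma beta_rem: "gd l s \<Longrightarrow> gd l t \<Longrightarrow>
  cmod (beta V n l s j - beta V n l t j - complex_of_real (s - t) * betad V n l t j)
    \<le> (512 * Gm + 8 * Gr + 64 * Gd) * om n j * (s - t)^2"
proof -
  assume gs: "gd l s" and gt: "gd l t"
  let ?rs = "complex_of_real (rr n l s j)" and ?rt = "complex_of_real (rr n l t j)"
  let ?rd = "complex_of_real (rrd n l t j)"
  let ?gs = "gam V n l s j" and ?gt = "gam V n l t j" and ?gd = "gamd V n l t j"
  let ?h = "complex_of_real (s - t)"
  have eq: "beta V n l s j - beta V n l t j - ?h * betad V n l t j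
     = complex_of_real (rr n l s j - rr n l t j - (s - t) * rrd n l t j) * ?gt
       + ?rt * (?gs - ?gt - ?h * ?gd)
       + complex_of_real (rr n l s j - rr n l t j) * (?gs - ?gt)"
    unfolding beta_def betad_def beta_rem_alg of_real_diff of_real_mult ..
  have b1: "cmod (complex_of_real (rr n l s j - rr n l t j - (s - t) * rrd n l t j) * ?gt) \<le> (512 * om n j * (s - t)^2) * Gm"
    unfolding norm_mult norm_of_real
    by (intro mult_mono rr_rem_bound[OF gs gt] gam_bound[OF v gt]) (auto simp: om_pos less_imp_le)
  have b2: "cmod (?rt * (?gs - ?gt - ?h * ?gd)) \<le> (8 * om n j) * (Gr * (s - t)^2)"
    unfolding norm_mult norm_of_real
    by (intro mult_mono rr_om[OF gt] gam_rem[OF v gs gt]) (auto simp: om_pos less_imp_le)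
  have b3: "cmod (complex_of_real (rr n l s j - rr n l t j) * (?gs - ?gt)) \<le> (64 * om n j * \<bar>s - t\<bar>) * (Gd * \<bar>s - t\<bar>)"
    unfolding norm_mult norm_of_real
    by (intro mult_mono rr_diff_bound[OF gs gt] gam_diff[OF v gs gt]) (auto simp: om_pos less_imp_le)
  have "cmod (beta V n l s j - beta V n l t j - ?h * betad V n l t j)
      \<le> (512 * om n j * (s - t)^2) * Gm + (8 * om n j) * (Gr * (s - t)^2) + (64 * om n j * \<bar>s - t\<bar>) * (Gd * \<bar>s - t\<bar>)"
    unfolding eq by (rule order_trans[OF norm_triangle_ineq] add_mono b1 b2 b3 order_trans[OF norm_triangle_ineq])+
  also have "\<dots> = 512 * om n j * (s - t)^2 * Gm + 8 * om n j * (Gr * (s - t)^2) + 64 * om n j * Gd * (\<bar>s - t\<bar> * \<bar>s - t\<bar>)"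
    by (simp only: mult_ac)
  also have "\<bar>s - t\<bar> * \<bar>s - t\<bar> = (s - t)^2" by (simp add: power2_eq_square abs_mult_self_eq)
  also have "512 * om n j * (s - t)^2 * Gm + 8 * om n j * (Gr * (s - t)^2) + 64 * om n j * Gd * (s - t)^2
      = (512 * Gm + 8 * Gr + 64 * Gd) * om n j * (s - t)^2"
    by (rule beta_rem_alg2)
  finally show ?thesis .
qed

lemma beta_ell2: "gd l s \<Longrightarrow> ell2 (beta V n l s)"
  by (rule om_bound_ell2(1)[OF beta_bound])
lemma betad_ell2: "gd l s \<Longrightarrow> ell2 (betad V n l s)"
  by (rule om_bound_ell2(1)[OF betad_bound])

lemma rr_ell2: "gd l s \<Longrightarrow> ell2 (\<lambda>j. complex_of_real (rr n l s j))"
proof -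
  assume g: "gd l s"
  show ?thesis by (rule om_bound_ell2(1)[where C=8]) (use rr_om[OF g] in simp)
qed

lemma om_le1: "om n j \<le> 1" unfolding om_def by simp

lemma Rhat_ell1: "gd l s \<Longrightarrow> ell2 x \<Longrightarrow> (\<lambda>j. cmod (Rhat n l s x j)) summable_on UNIV"
  unfolding Rhat_eq by (rule ell2_prod_abs[OF rr_ell2])

lemma Rhat_ell2: "gd l s \<Longrightarrow> ell2 x \<Longrightarrow> ell2 (Rhat n l s x)"
proof -
  assume g: "gd l s" and x: "ell2 x"
  have "\<bar>rr n l s j\<bar> \<le> 8" for j using rr_om[OF g, of n j] om_le1[of j] by linarith
  then show ?thesis unfolding Rhat_eq
    by (intro ell2_comparison(1)[OF x, where C=8]) (simp add: norm_mult mult_right_mono)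
qed

lemma alpha_ell1: "gd l s \<Longrightarrow> (\<lambda>k. cmod (alpha V n l s k)) summable_on UNIV"
proof -
  assume g: "gd l s"
  have om2: "ell2 (\<lambda>k. complex_of_real (om n k))" using om_sq_summable by (simp add: ell2_def)
  have s: "(\<lambda>k. (C0 * 8) * cmod (Vhat V (n - k) * complex_of_real (om n k))) summable_on UNIV"
    by (rule summable_on_cmult_right[OF ell2_prod_abs[OF ell2_shift1[OF v] om2]])
  show ?thesis
  proof (rule summable_on_comparison_test[OF s])
    fix k
    have "cmod (alpha V n l s k) = C0 * cmod (Vhat V (n - k)) * \<bar>rr n l s k\<bar>"
      unfolding alpha_def by (simp add: norm_mult cmod_c0)
    also have "\<dots> \<le> C0 * cmod (Vhat V (n - k)) * (8 * om n k)"
      by (intro mult_left_mono rr_om[OF g]) (simp add: C0_nonneg)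
    also have "\<dots> = (C0 * 8) * cmod (Vhat V (n - k) * complex_of_real (om n k))"
      using om_pos[of n k] by (simp add: norm_mult)
    finally show "cmod (alpha V n l s k) \<le> (C0 * 8) * cmod (Vhat V (n - k) * complex_of_real (om n k))" .
  qed simp
qed

lemma T2_repr:
  assumes g: "gd l s" and x: "ell2 x"
  shows "T2 V n l s x n = (\<Sum>\<^sub>\<infinity>j. beta V n l s j * x j)"
proof -
  define y where "y = Rhat n l s x"
  define f where "f k j = alpha V n l s k * (c0 * (Vhat V (k - j) * y j))" for k j
  have y1: "(\<lambda>j. cmod (y j)) summable_on UNIV" unfolding y_def by (rule Rhat_ell1[OF g x])
  define Y where "Y = (\<Sum>\<^sub>\<infinity>j. cmod (y j))"
  have a1: "(\<lambda>k. cmod (alpha V n l s k)) summable_on UNIV" by (rule alpha_ell1[OF g])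
  have fsum: "(\<lambda>(k, j). f k j) summable_on UNIV \<times> UNIV"
  proof (rule abs_summable_summable)
    have row: "(\<lambda>j. norm (f k j)) summable_on UNIV" for k
    proof -
      have s: "(\<lambda>j. (cmod (alpha V n l s k) * C0 * NV V) * cmod (y j)) summable_on UNIV"
        by (rule summable_on_cmult_right[OF y1])
      show ?thesis
      proof (rule summable_on_comparison_test[OF s])
        fix j
        have "norm (f k j) = cmod (alpha V n l s k) * C0 * (cmod (Vhat V (k - j)) * cmod (y j))"
          unfolding f_def by (simp add: norm_mult cmod_c0)
        also have "\<dots> \<le> cmod (alpha V n l s k) * C0 * (NV V * cmod (y j))"
          by (intro mult_left_mono mult_right_mono vb[OF v]) (simp_all add: C0_nonneg)
        finally show "norm (f k j) \<le> (cmod (alpha V n l s k) * C0 * NV V) * cmod (y j)" by (simp add: mult_ac)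
      qed simp
    qed
    have rowb: "(\<Sum>\<^sub>\<infinity>j. norm (f k j)) \<le> (C0 * NV V * Y) * cmod (alpha V n l s k)" for k
    proof -
      have s: "(\<lambda>j. (cmod (alpha V n l s k) * C0 * NV V) * cmod (y j)) summable_on UNIV"
        by (rule summable_on_cmult_right[OF y1])
      have "(\<Sum>\<^sub>\<infinity>j. norm (f k j)) \<le> (\<Sum>\<^sub>\<infinity>j. (cmod (alpha V n l s k) * C0 * NV V) * cmod (y j))"
      proof (rule infsum_mono[OF row s])
        fix j
        have "norm (f k j) = cmod (alpha V n l s k) * C0 * (cmod (Vhat V (k - j)) * cmod (y j))"
          unfolding f_def by (simp add: norm_mult cmod_c0)
        also have "\<dots> \<le> cmod (alpha V n l s k) * C0 * (NV V * cmod (y j))"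
          by (intro mult_left_mono mult_right_mono vb[OF v]) (simp_all add: C0_nonneg)
        finally show "norm (f k j) \<le> (cmod (alpha V n l s k) * C0 * NV V) * cmod (y j)" by (simp add: mult_ac)
      qed
      also have "\<dots> = (cmod (alpha V n l s k) * C0 * NV V) * Y"
        unfolding Y_def by (rule infsum_cmult_right')
      also have "\<dots> = (C0 * NV V * Y) * cmod (alpha V n l s k)" by (simp only: mult_ac)
      finally show ?thesis .
    qed
    have col: "(\<lambda>k. norm (\<Sum>\<^sub>\<infinity>j. norm (f k j))) summable_on UNIV"
    proof -
      have s: "(\<lambda>k. (C0 * NV V * Y) * cmod (alpha V n l s k)) summable_on UNIV"
        by (rule summable_on_cmult_right[OF a1])
      have nn: "0 \<le> (\<Sum>\<^sub>\<infinity>j. norm (f k j))" for k by (simp add: infsum_nonneg)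
      show ?thesis
        by (rule summable_on_comparison_test[OF s]) (use rowb nn in simp_all)
    qed
    show "(\<lambda>x. norm ((\<lambda>(k, j). f k j) x)) summable_on UNIV \<times> UNIV"
      using Infinite_Sum.abs_summable_on_Sigma_iff[where f="\<lambda>(k, j). f k j" and A=UNIV and B="\<lambda>_. UNIV"] row col by simp
  qed
  have "T2 V n l s x n = (\<Sum>\<^sub>\<infinity>k. alpha V n l s k * Vop V y k)"
    unfolding T2_T1 T1_repr y_def ..
  also have "\<dots> = (\<Sum>\<^sub>\<infinity>k. \<Sum>\<^sub>\<infinity>j. f k j)"
    unfolding f_def Vop_def c0_def[symmetric] by (simp only: infsum_cmult_right')
  also have "\<dots> = (\<Sum>\<^sub>\<infinity>j. \<Sum>\<^sub>\<infinity>k. f k j)"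
    by (rule infsum_swap_banach[OF fsum])
  also have "\<dots> = (\<Sum>\<^sub>\<infinity>j. beta V n l s j * x j)"
  proof (rule infsum_cong)
    fix j
    have "(\<Sum>\<^sub>\<infinity>k. f k j) = (\<Sum>\<^sub>\<infinity>k. c0 * (alpha V n l s k * Vhat V (k - j)) * y j)"
      unfolding f_def by (simp only: mult_ac)
    also have "\<dots> = (\<Sum>\<^sub>\<infinity>k. c0 * (alpha V n l s k * Vhat V (k - j))) * y j"
      by (rule infsum_cmult_left')
    also have "\<dots> = gam V n l s j * y j"
      unfolding gam_def by (simp only: infsum_cmult_right')
    also have "\<dots> = beta V n l s j * x j"
      unfolding beta_def y_def Rhat_eq by (simp only: mult_ac)
    finally show "(\<Sum>\<^sub>\<infinity>k. f k j) = beta V n l s j * x j" .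
  qed
  finally show ?thesis .
qed

end

lemma U0_U0adj: "U0 t (U0adj t x) = x"
proof
  fix k
  have "exp (- \<i> * complex_of_real (phase0 k t)) * exp (\<i> * complex_of_real (phase0 k t)) = 1"
    using exp_minus_inverse[of "\<i> * complex_of_real (phase0 k t)"] by (simp add: mult.commute)
  then show "U0 t (U0adj t x) k = x k"
    unfolding U0_def U0adj_def by (simp add: mult.assoc[symmetric])
qed

lemma U0_Omega: "U0 t (Omega U t \<psi>) = U t \<psi>"
  unfolding Omega_def by (rule U0_U0adj)

definition ee :: "int \<Rightarrow> real \<Rightarrow> complex" where
  "ee n s = exp (\<i> * complex_of_real (phase0 n s))"

lemma U0adj_n: "U0adj t x n = ee n t * x n"
  unfolding U0adj_def ee_def ..

lemma phase0_deriv: "((phase0 n) has_real_derivative E n t) (at t)"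
  unfolding phase0_def[abs_def] E_def
  by (auto intro!: derivative_eq_intros simp: power2_eq_square)

lemma ee_deriv: "((ee n) has_vector_derivative (\<i> * complex_of_real (E n t) * ee n t)) (at t)"
proof -
  have a: "((\<lambda>s. \<i> * complex_of_real (phase0 n s)) has_vector_derivative (\<i> * complex_of_real (E n t))) (at t)"
    by (intro has_vector_derivative_mult_right has_vector_derivative_of_real phase0_deriv)
  have b: "(exp has_field_derivative exp (\<i> * complex_of_real (phase0 n t))) (at (\<i> * complex_of_real (phase0 n t)))"
    by (rule DERIV_exp)
  have "((exp \<circ> (\<lambda>s. \<i> * complex_of_real (phase0 n s))) has_vector_derivative
        (\<i> * complex_of_real (E n t)) * exp (\<i> * complex_of_real (phase0 n t))) (at t)"
    by (rule field_vector_diff_chain_at[OF a b])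
  then show ?thesis unfolding ee_def o_def by simp
qed

lemma gd_eventually: assumes "gd l t" shows "\<forall>\<^sub>F s in at t. gd l s"
proof -
  define d where "d = 3/8 - \<bar>t - real_of_int l / 2\<bar>"
  have d: "d > 0" using assms unfolding d_def gd_def by simp
  show ?thesis unfolding eventually_at
  proof (intro exI conjI ballI impI)
    show "d > 0" by (rule d)
    fix s :: real assume "s \<noteq> t \<and> dist s t < d"
    then have "\<bar>s - t\<bar> < d" by (simp add: dist_real_def)
    then show "gd l s" unfolding gd_def d_def by linarith
  qed
qed

lemma gd_open: "open {s. gd l s}"
proof -
  have "{s. gd l s} = ball (real_of_int l / 2) (3/8)"
    by (auto simp: gd_def ball_def dist_real_def abs_minus_commute)
  then show ?thesis by simp
qed

lemma l2norm_zero: "l2norm (\<lambda>k. 0) = 0" unfolding l2norm_def by simp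

lemma l2_deriv_const: "l2_has_deriv (\<lambda>s. x) (\<lambda>k. 0) t"
  unfolding l2_has_deriv_def by (simp add: l2norm_zero)

context
  fixes V :: "real \<Rightarrow> real"
  assumes v: "ell2 (Vhat V)"
begin

lemma Vop_eq: "Vop V x m = c0 * (\<Sum>\<^sub>\<infinity>j. Vhat V (m - j) * x j)"
  unfolding Vop_def c0_def ..

lemma Vop_ell2: "(\<lambda>j. cmod (x j)) summable_on UNIV \<Longrightarrow> ell2 (Vop V x)"
  unfolding Vop_eq[abs_def] by (intro ell2_scale conv_ell2 v)

lemma Vop_summ: "ell2 x \<Longrightarrow> (\<lambda>j. Vhat V (m - j) * x j) summable_on UNIV"
  by (rule ell2_prod[OF ell2_shift1[OF v]])

lemma Vop_diff: "ell2 x \<Longrightarrow> ell2 y \<Longrightarrow> Vop V (\<lambda>k. x k - y k) m = Vop V x m - Vop V y m"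
proof -
  assume x: "ell2 x" and y: "ell2 y"
  have "(\<Sum>\<^sub>\<infinity>j. Vhat V (m - j) * (x j - y j)) = (\<Sum>\<^sub>\<infinity>j. Vhat V (m - j) * x j - Vhat V (m - j) * y j)"
    by (simp only: right_diff_distrib)
  also have "\<dots> = (\<Sum>\<^sub>\<infinity>j. Vhat V (m - j) * x j) - (\<Sum>\<^sub>\<infinity>j. Vhat V (m - j) * y j)"
    by (rule infsum_diff_c[OF Vop_summ[OF x] Vop_summ[OF y]])
  finally show ?thesis unfolding Vop_eq by (simp only: right_diff_distrib)
qed

lemma Vop_add: "ell2 x \<Longrightarrow> ell2 y \<Longrightarrow> Vop V (\<lambda>k. x k + y k) m = Vop V x m + Vop V y m"
proof -
  assume x: "ell2 x" and y: "ell2 y"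
  have "(\<Sum>\<^sub>\<infinity>j. Vhat V (m - j) * (x j + y j)) = (\<Sum>\<^sub>\<infinity>j. Vhat V (m - j) * x j + Vhat V (m - j) * y j)"
    by (simp only: distrib_left)
  also have "\<dots> = (\<Sum>\<^sub>\<infinity>j. Vhat V (m - j) * x j) + (\<Sum>\<^sub>\<infinity>j. Vhat V (m - j) * y j)"
    by (rule infsum_add[OF Vop_summ[OF x] Vop_summ[OF y]])
  finally show ?thesis unfolding Vop_eq by (simp only: distrib_left)
qed

lemma PP_split: "x = (\<lambda>k. PP n l x k + PPperp n l x k)"
  unfolding PP_def PPperp_def by auto

lemma PP_ell1: "(\<lambda>j. cmod (x j)) summable_on UNIV \<Longrightarrow> (\<lambda>j. cmod (PP n l x j)) summable_on UNIV"
  by (erule summable_on_comparison_test) (simp_all add: PP_def)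
lemma PPperp_ell1: "(\<lambda>j. cmod (x j)) summable_on UNIV \<Longrightarrow> (\<lambda>j. cmod (PPperp n l x j)) summable_on UNIV"
  by (erule summable_on_comparison_test) (simp_all add: PPperp_def)
lemma PP_ell2: "ell2 x \<Longrightarrow> ell2 (PP n l x)"
  by (erule ell2_comparison(1)[where C=1]) (simp add: PP_def)
lemma PPperp_ell2: "ell2 x \<Longrightarrow> ell2 (PPperp n l x)"
  by (erule ell2_comparison(1)[where C=1]) (simp add: PPperp_def)

lemma Rhat_H0: "gd l t \<Longrightarrow> (\<lambda>j. Rhat n l t (H0 t x) j - complex_of_real (E n t) * Rhat n l t x j) = PPperp n l x"
proof
  fix j assume g: "gd l t"
  have "Rhat n l t (H0 t x) j - complex_of_real (E n t) * Rhat n l t x j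
      = complex_of_real (rr n l t j * (E j t - E n t)) * x j"
    unfolding Rhat_eq H0_def by (simp add: algebra_simps)
  also have "\<dots> = PPperp n l x j" unfolding rr_Ediff[OF g] PPperp_def by simp
  finally show "Rhat n l t (H0 t x) j - complex_of_real (E n t) * Rhat n l t x j = PPperp n l x j" .
qed

end

lemma final_alg:
  fixes e L0 A0 B0 AP AQ BV dA dB E :: complex
  shows "e*L0 - e*(BV + \<i>*dB - AP - \<i>*dA)
    = \<i> * (e * ((dA + (-\<i>)*((L0 + E*A0) + (AP + AQ))) - (dB + (-\<i>)*((AQ + E*B0) + BV))) + (\<i> * E * e) * (A0 - B0))"
  by (simp add: algebra_simps)

context
  fixes V :: "real \<Rightarrow> real" and U :: "real \<Rightarrow> state \<Rightarrow> state" and n l :: int and \<psi> :: state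
  assumes v: "ell2 (Vhat V)" and propU: "is_propagator V U" and psi: "H2 \<psi>"
begin

lemma psi_ell2: "ell2 \<psi>" by (rule H2_ell2[OF psi])

lemma phi_ell2: "ell2 (U s \<psi>)" and phi_norm: "l2norm (U s \<psi>) = l2norm \<psi>"
  using propU psi_ell2 unfolding is_propagator_def by auto

lemma phi_H2: "H2 (U s \<psi>)" and phi_der: "l2_has_deriv (\<lambda>s. U s \<psi>) (\<lambda>k. - \<i> * Hop V t (U t \<psi>) k) t"
  using propU psi unfolding is_propagator_def by auto

lemma phi_ell1: "(\<lambda>j. cmod (U s \<psi> j)) summable_on UNIV" by (rule H2_ell1[OF phi_H2])

lemma H0phi_ell2: "ell2 (H0 t (U s \<psi>))" by (rule H2_H0_ell2[OF phi_H2])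

lemma Vphi_ell2: "ell2 (Vop V (U s \<psi>))" by (rule Vop_ell2[OF v phi_ell1])

lemma D_ell2: "ell2 (\<lambda>k. - \<i> * Hop V t (U t \<psi>) k)"
  unfolding Hop_def by (intro ell2_scale ell2_add H0phi_ell2 Vphi_ell2)

lemma dA: assumes g: "gd l t"
  shows "((\<lambda>s. \<Sum>\<^sub>\<infinity>j. alpha V n l s j * U s \<psi> j) has_vector_derivative
     ((\<Sum>\<^sub>\<infinity>j. alphad V n l t j * U t \<psi> j) + (\<Sum>\<^sub>\<infinity>j. alpha V n l t j * (- \<i> * Hop V t (U t \<psi>) j)))) (at t)"
proof (rule pairing_deriv[where w="om n" and K="C0 * NV V * 512" and B="l2norm \<psi>"])
  show "(\<lambda>j. (om n j)\<^sup>2) summable_on UNIV" by (rule om_sq_summable)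
  show "ell2 (alpha V n l t)" by (rule alpha_ell2[OF v g])
  show "ell2 (alphad V n l t)" by (rule alphad_ell2[OF v g])
  show "\<forall>\<^sub>F s in at t. \<forall>j. cmod (alpha V n l s j - alpha V n l t j - complex_of_real (s - t) * alphad V n l t j) \<le> C0 * NV V * 512 * om n j * (s - t)\<^sup>2"
    using gd_eventually[OF g] by eventually_elim (use alpha_rem[OF v _ g] in auto)
  show "ell2 (U s \<psi>)" for s by (rule phi_ell2)
  show "l2norm (U s \<psi>) \<le> l2norm \<psi>" for s by (simp add: phi_norm)
  show "ell2 (\<lambda>k. - \<i> * Hop V t (U t \<psi>) k)" by (rule D_ell2)
  show "l2_has_deriv (\<lambda>s. U s \<psi>) (\<lambda>k. - \<i> * Hop V t (U t \<psi>) k) t" by (rule phi_der)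
qed

lemma dB: assumes g: "gd l t"
  shows "((\<lambda>s. \<Sum>\<^sub>\<infinity>j. beta V n l s j * U s \<psi> j) has_vector_derivative
     ((\<Sum>\<^sub>\<infinity>j. betad V n l t j * U t \<psi> j) + (\<Sum>\<^sub>\<infinity>j. beta V n l t j * (- \<i> * Hop V t (U t \<psi>) j)))) (at t)"
proof (rule pairing_deriv[where w="om n" and K="512 * Gm V n + 8 * Gr V n + 64 * Gd V n" and B="l2norm \<psi>"])
  show "(\<lambda>j. (om n j)\<^sup>2) summable_on UNIV" by (rule om_sq_summable)
  show "ell2 (beta V n l t)" by (rule beta_ell2[OF v g])
  show "ell2 (betad V n l t)" by (rule betad_ell2[OF v g])
  show "\<forall>\<^sub>F s in at t. \<forall>j. cmod (beta V n l s j - beta V n l t j - complex_of_real (s - t) * betad V n l t j) \<le> (512 * Gm V n + 8 * Gr V n + 64 * Gd V n) * om n j * (s - t)\<^sup>2"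
    using gd_eventually[OF g] by eventually_elim (use beta_rem[OF v _ g] in auto)
  show "ell2 (U s \<psi>)" for s by (rule phi_ell2)
  show "l2norm (U s \<psi>) \<le> l2norm \<psi>" for s by (simp add: phi_norm)
  show "ell2 (\<lambda>k. - \<i> * Hop V t (U t \<psi>) k)" by (rule D_ell2)
  show "l2_has_deriv (\<lambda>s. U s \<psi>) (\<lambda>k. - \<i> * Hop V t (U t \<psi>) k) t" by (rule phi_der)
qed

end

context
  fixes V :: "real \<Rightarrow> real" and n l :: int
  assumes v: "ell2 (Vhat V)"
begin

lemma dT1: assumes g: "gd l t" and x: "ell2 x"
  shows "dT (T1 V n l) t x n = (\<Sum>\<^sub>\<infinity>j. alphad V n l t j * x j)"
proof -
  have "((\<lambda>s. \<Sum>\<^sub>\<infinity>j. alpha V n l s j * x j) has_vector_derivative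
     ((\<Sum>\<^sub>\<infinity>j. alphad V n l t j * x j) + (\<Sum>\<^sub>\<infinity>j. alpha V n l t j * 0))) (at t)"
  proof (rule pairing_deriv[where w="om n" and K="C0 * NV V * 512" and B="l2norm x" and \<phi>="\<lambda>s. x"])
    show "(\<lambda>j. (om n j)\<^sup>2) summable_on UNIV" by (rule om_sq_summable)
    show "ell2 (alpha V n l t)" by (rule alpha_ell2[OF v g])
    show "ell2 (alphad V n l t)" by (rule alphad_ell2[OF v g])
    show "\<forall>\<^sub>F s in at t. \<forall>j. cmod (alpha V n l s j - alpha V n l t j - complex_of_real (s - t) * alphad V n l t j) \<le> C0 * NV V * 512 * om n j * (s - t)\<^sup>2"
      using gd_eventually[OF g] by eventually_elim (use alpha_rem[OF v _ g] in auto)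
  qed (simp_all add: x ell2_zero l2_deriv_const)
  then have "((\<lambda>s. T1 V n l s x n) has_vector_derivative (\<Sum>\<^sub>\<infinity>j. alphad V n l t j * x j)) (at t)"
    by (simp add: T1_repr)
  then show ?thesis unfolding dT_def by (rule vector_derivative_at)
qed

lemma dT2: assumes g: "gd l t" and x: "ell2 x"
  shows "dT (T2 V n l) t x n = (\<Sum>\<^sub>\<infinity>j. betad V n l t j * x j)"
proof -
  have "((\<lambda>s. \<Sum>\<^sub>\<infinity>j. beta V n l s j * x j) has_vector_derivative
     ((\<Sum>\<^sub>\<infinity>j. betad V n l t j * x j) + (\<Sum>\<^sub>\<infinity>j. beta V n l t j * 0))) (at t)"
  proof (rule pairing_deriv[where w="om n" and K="512 * Gm V n + 8 * Gr V n + 64 * Gd V n" and B="l2norm x" and \<phi>="\<lambda>s. x"])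
    show "(\<lambda>j. (om n j)\<^sup>2) summable_on UNIV" by (rule om_sq_summable)
    show "ell2 (beta V n l t)" by (rule beta_ell2[OF v g])
    show "ell2 (betad V n l t)" by (rule betad_ell2[OF v g])
    show "\<forall>\<^sub>F s in at t. \<forall>j. cmod (beta V n l s j - beta V n l t j - complex_of_real (s - t) * betad V n l t j) \<le> (512 * Gm V n + 8 * Gr V n + 64 * Gd V n) * om n j * (s - t)\<^sup>2"
      using gd_eventually[OF g] by eventually_elim (use beta_rem[OF v _ g] in auto)
  qed (simp_all add: x ell2_zero l2_deriv_const)
  then have d: "((\<lambda>s. \<Sum>\<^sub>\<infinity>j. beta V n l s j * x j) has_vector_derivative (\<Sum>\<^sub>\<infinity>j. betad V n l t j * x j)) (at t)"
    by simp
  have "((\<lambda>s. T2 V n l s x n) has_vector_derivative (\<Sum>\<^sub>\<infinity>j. betad V n l t j * x j)) (at t)"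
    by (rule has_vector_derivative_transform_within_open[OF d gd_open]) (use g T2_repr[OF v _ x] in auto)
  then show ?thesis unfolding dT_def by (rule vector_derivative_at)
qed

end

definition Gf :: "(real \<Rightarrow> real) \<Rightarrow> (real \<Rightarrow> state \<Rightarrow> state) \<Rightarrow> int \<Rightarrow> int \<Rightarrow> state \<Rightarrow> real \<Rightarrow> complex" where
  "Gf V U n l \<psi> s = \<i> * (ee n s * ((\<Sum>\<^sub>\<infinity>j. alpha V n l s j * U s \<psi> j) - (\<Sum>\<^sub>\<infinity>j. beta V n l s j * U s \<psi> j)))"

lemma Vop_scale: "Vop V (\<lambda>j. c * x j) m = c * Vop V x m"
proof -
  have "(\<Sum>\<^sub>\<infinity>j. Vhat V (m - j) * (c * x j)) = (\<Sum>\<^sub>\<infinity>j. c * (Vhat V (m - j) * x j))"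
    by (simp only: mult.left_commute)
  also have "\<dots> = c * (\<Sum>\<^sub>\<infinity>j. Vhat V (m - j) * x j)" by (rule infsum_cmult_right')
  finally show ?thesis unfolding Vop_def by (simp only: mult.left_commute)
qed

lemma T1_Vop: "T1 V n l t x n = Vop V (Rhat n l t x) n"
  unfolding T1_def Pm_def by simp

lemma sum_lin2:
  fixes a x y :: state
  assumes "(\<lambda>j. a j * x j) summable_on UNIV" "(\<lambda>j. a j * y j) summable_on UNIV"
  shows "(\<Sum>\<^sub>\<infinity>j. a j * (x j + y j)) = (\<Sum>\<^sub>\<infinity>j. a j * x j) + (\<Sum>\<^sub>\<infinity>j. a j * y j)"
proof -
  have "(\<Sum>\<^sub>\<infinity>j. a j * (x j + y j)) = (\<Sum>\<^sub>\<infinity>j. a j * x j + a j * y j)" by (simp only: distrib_left)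
  also have "\<dots> = (\<Sum>\<^sub>\<infinity>j. a j * x j) + (\<Sum>\<^sub>\<infinity>j. a j * y j)" by (rule infsum_add[OF assms])
  finally show ?thesis .
qed

lemma sum_lin_diff:
  fixes a x y :: state
  assumes "(\<lambda>j. a j * x j) summable_on UNIV" "(\<lambda>j. a j * y j) summable_on UNIV"
  shows "(\<Sum>\<^sub>\<infinity>j. a j * (x j - c * y j)) = (\<Sum>\<^sub>\<infinity>j. a j * x j) - c * (\<Sum>\<^sub>\<infinity>j. a j * y j)"
proof -
  have s2: "(\<lambda>j. c * (a j * y j)) summable_on UNIV" by (rule summable_on_cmult_right[OF assms(2)])
  have "(\<Sum>\<^sub>\<infinity>j. a j * (x j - c * y j)) = (\<Sum>\<^sub>\<infinity>j. a j * x j - c * (a j * y j))"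
    by (simp only: right_diff_distrib mult.left_commute)
  also have "\<dots> = (\<Sum>\<^sub>\<infinity>j. a j * x j) - (\<Sum>\<^sub>\<infinity>j. c * (a j * y j))" by (rule infsum_diff_c[OF assms(1) s2])
  also have "\<dots> = (\<Sum>\<^sub>\<infinity>j. a j * x j) - c * (\<Sum>\<^sub>\<infinity>j. a j * y j)" by (simp only: infsum_cmult_right')
  finally show ?thesis .
qed

context
  fixes V :: "real \<Rightarrow> real" and U :: "real \<Rightarrow> state \<Rightarrow> state" and n l :: int and \<psi> :: state
  assumes v: "ell2 (Vhat V)" and propU: "is_propagator V U" and psi: "H2 \<psi>"
begin

lemma G_deriv:
  assumes g: "gd l t"
  shows "((Gf V U n l \<psi>) has_vector_derivative
           (lhs_integrand V U n l \<psi> t n - rhs_integrand V U n l \<psi> t n)) (at t)"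
proof -
  define \<phi> where "\<phi> = U t \<psi>"
  define H where "H = H0 t \<phi>"
  define Vx where "Vx = Vop V \<phi>"
  define e where "e = ee n t"
  define Ec where "Ec = complex_of_real (E n t)"
  define A0 where "A0 = (\<Sum>\<^sub>\<infinity>j. alpha V n l t j * \<phi> j)"
  define B0 where "B0 = (\<Sum>\<^sub>\<infinity>j. beta V n l t j * \<phi> j)"
  define dA where "dA = (\<Sum>\<^sub>\<infinity>j. alphad V n l t j * \<phi> j)"
  define dB where "dB = (\<Sum>\<^sub>\<infinity>j. betad V n l t j * \<phi> j)"
  define AH where "AH = (\<Sum>\<^sub>\<infinity>j. alpha V n l t j * H j)"
  define AV where "AV = (\<Sum>\<^sub>\<infinity>j. alpha V n l t j * Vx j)"
  define BH where "BH = (\<Sum>\<^sub>\<infinity>j. beta V n l t j * H j)"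
  define BV where "BV = (\<Sum>\<^sub>\<infinity>j. beta V n l t j * Vx j)"
  define L0 where "L0 = Vop V (PPperp n l \<phi>) n"
  define AP where "AP = (\<Sum>\<^sub>\<infinity>j. alpha V n l t j * Vop V (PP n l \<phi>) j)"
  define AQ where "AQ = (\<Sum>\<^sub>\<infinity>j. alpha V n l t j * Vop V (PPperp n l \<phi>) j)"
  have \<phi>2: "ell2 \<phi>" unfolding \<phi>_def by (rule phi_ell2[OF v propU psi])
  have \<phi>1: "(\<lambda>j. cmod (\<phi> j)) summable_on UNIV" unfolding \<phi>_def by (rule phi_ell1[OF v propU psi])
  have H2': "ell2 H" unfolding H_def \<phi>_def by (rule H0phi_ell2[OF v propU psi])
  have Vx2: "ell2 Vx" unfolding Vx_def \<phi>_def by (rule Vphi_ell2[OF v propU psi])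
  have al: "ell2 (alpha V n l t)" by (rule alpha_ell2[OF v g])
  have be: "ell2 (beta V n l t)" by (rule beta_ell2[OF v g])
  have RH2: "ell2 (Rhat n l t H)" by (rule Rhat_ell2[OF v g H2'])
  have Rp2: "ell2 (Rhat n l t \<phi>)" by (rule Rhat_ell2[OF v g \<phi>2])
  have RHv: "ell2 (Vop V (Rhat n l t H))" by (rule Vop_ell2[OF v Rhat_ell1[OF v g H2']])
  have Rpv: "ell2 (Vop V (Rhat n l t \<phi>))" by (rule Vop_ell2[OF v Rhat_ell1[OF v g \<phi>2]])
  have PPv: "ell2 (Vop V (PP n l \<phi>))" by (rule Vop_ell2[OF v PP_ell1[OF v \<phi>1]])
  have PQv: "ell2 (Vop V (PPperp n l \<phi>))" by (rule Vop_ell2[OF v PPperp_ell1[OF v \<phi>1]])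
    have f34: "Vop V (PPperp n l \<phi>) m = Vop V (Rhat n l t H) m - Ec * Vop V (Rhat n l t \<phi>) m" for m
  proof -
    have "Vop V (PPperp n l \<phi>) m = Vop V (\<lambda>j. Rhat n l t H j - Ec * Rhat n l t \<phi> j) m"
      unfolding H_def Ec_def Rhat_H0[OF v g] ..
    also have "\<dots> = Vop V (Rhat n l t H) m - Vop V (\<lambda>j. Ec * Rhat n l t \<phi> j) m"
      by (rule Vop_diff[OF v RH2 ell2_scale[OF Rp2]])
    also have "\<dots> = Vop V (Rhat n l t H) m - Ec * Vop V (Rhat n l t \<phi>) m" by (simp only: Vop_scale)
    finally show ?thesis .
  qed
  have f3: "AH = L0 + Ec * A0"
  proof -
    have "AH = Vop V (Rhat n l t H) n" unfolding AH_def T1_repr[symmetric] T1_Vop ..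
    moreover have "A0 = Vop V (Rhat n l t \<phi>) n" unfolding A0_def T1_repr[symmetric] T1_Vop ..
    ultimately show ?thesis unfolding L0_def f34 by simp
  qed
  have f4: "BH = AQ + Ec * B0"
  proof -
    have "BH = (\<Sum>\<^sub>\<infinity>j. alpha V n l t j * Vop V (Rhat n l t H) j)"
      unfolding BH_def T2_repr[OF v g H2', symmetric] T2_T1 T1_repr ..
    moreover have "B0 = (\<Sum>\<^sub>\<infinity>j. alpha V n l t j * Vop V (Rhat n l t \<phi>) j)"
      unfolding B0_def T2_repr[OF v g \<phi>2, symmetric] T2_T1 T1_repr ..
    moreover have "AQ = (\<Sum>\<^sub>\<infinity>j. alpha V n l t j * Vop V (Rhat n l t H) j) - Ec * (\<Sum>\<^sub>\<infinity>j. alpha V n l t j * Vop V (Rhat n l t \<phi>) j)"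
      unfolding AQ_def f34 by (rule sum_lin_diff[OF ell2_prod[OF al RHv] ell2_prod[OF al Rpv]])
    ultimately show ?thesis by simp
  qed
  have f5: "AV = AP + AQ"
  proof -
    have "Vx = (\<lambda>k. Vop V (PP n l \<phi>) k + Vop V (PPperp n l \<phi>) k)"
    proof
      fix k
      have "Vx k = Vop V (\<lambda>k. PP n l \<phi> k + PPperp n l \<phi> k) k" unfolding Vx_def by (subst PP_split[OF v, where x=\<phi> and n=n and l=l]) simp
      also have "\<dots> = Vop V (PP n l \<phi>) k + Vop V (PPperp n l \<phi>) k"
        by (rule Vop_add[OF v PP_ell2[OF v \<phi>2] PPperp_ell2[OF v \<phi>2]])
      finally show "Vx k = Vop V (PP n l \<phi>) k + Vop V (PPperp n l \<phi>) k" .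
    qed
    then show ?thesis unfolding AV_def AP_def AQ_def
      by (simp only: sum_lin2[OF ell2_prod[OF al PPv] ell2_prod[OF al PQv]])
  qed
  have Dv: "(\<lambda>k. - \<i> * Hop V t (U t \<psi>) k) = (\<lambda>k. - \<i> * (H k + Vx k))"
    unfolding Hop_def H_def Vx_def \<phi>_def ..
  have f1: "(\<Sum>\<^sub>\<infinity>j. alpha V n l t j * (- \<i> * Hop V t (U t \<psi>) j)) = - \<i> * (AH + AV)"
  proof -
    have "(\<Sum>\<^sub>\<infinity>j. alpha V n l t j * (- \<i> * (H j + Vx j))) = (\<Sum>\<^sub>\<infinity>j. - \<i> * (alpha V n l t j * (H j + Vx j)))"
      by (simp only: mult.left_commute)
    also have "\<dots> = - \<i> * (\<Sum>\<^sub>\<infinity>j. alpha V n l t j * (H j + Vx j))" by (rule infsum_cmult_right')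
    also have "\<dots> = - \<i> * (AH + AV)" unfolding AH_def AV_def
      by (simp only: sum_lin2[OF ell2_prod[OF al H2'] ell2_prod[OF al Vx2]])
    finally show ?thesis using Dv by metis
  qed
  have f2: "(\<Sum>\<^sub>\<infinity>j. beta V n l t j * (- \<i> * Hop V t (U t \<psi>) j)) = - \<i> * (BH + BV)"
  proof -
    have "(\<Sum>\<^sub>\<infinity>j. beta V n l t j * (- \<i> * (H j + Vx j))) = (\<Sum>\<^sub>\<infinity>j. - \<i> * (beta V n l t j * (H j + Vx j)))"
      by (simp only: mult.left_commute)
    also have "\<dots> = - \<i> * (\<Sum>\<^sub>\<infinity>j. beta V n l t j * (H j + Vx j))" by (rule infsum_cmult_right')
    also have "\<dots> = - \<i> * (BH + BV)" unfolding BH_def BV_def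
      by (simp only: sum_lin2[OF ell2_prod[OF be H2'] ell2_prod[OF be Vx2]])
    finally show ?thesis using Dv by metis
  qed
  have lhs: "lhs_integrand V U n l \<psi> t n = e * L0"
    unfolding lhs_integrand_def U0_Omega U0adj_n e_def L0_def \<phi>_def Pm_def by simp
  have rhs: "rhs_integrand V U n l \<psi> t n = e * (BV + \<i> * dB - AP - \<i> * dA)"
  proof -
    have "rhs_integrand V U n l \<psi> t n = e * (T2 V n l t Vx n + \<i> * dT (T2 V n l) t \<phi> n
                   - T1 V n l t (Vop V (PP n l \<phi>)) n - \<i> * dT (T1 V n l) t \<phi> n)"
      unfolding rhs_integrand_def Let_def U0_Omega U0adj_n e_def \<phi>_def Vx_def ..
    also have "T2 V n l t Vx n = BV" unfolding BV_def by (rule T2_repr[OF v g Vx2])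
    also have "dT (T2 V n l) t \<phi> n = dB" unfolding dB_def by (rule dT2[OF v g \<phi>2])
    also have "T1 V n l t (Vop V (PP n l \<phi>)) n = AP" unfolding AP_def by (rule T1_repr)
    also have "dT (T1 V n l) t \<phi> n = dA" unfolding dA_def by (rule dT1[OF v g \<phi>2])
    finally show ?thesis .
  qed
  have d: "((Gf V U n l \<psi>) has_vector_derivative
      \<i> * (e * ((dA + (-\<i>) * (AH + AV)) - (dB + (-\<i>) * (BH + BV))) + (\<i> * Ec * e) * (A0 - B0))) (at t)"
  proof -
    have dd: "((\<lambda>s. (\<Sum>\<^sub>\<infinity>j. alpha V n l s j * U s \<psi> j) - (\<Sum>\<^sub>\<infinity>j. beta V n l s j * U s \<psi> j)) has_vector_derivative
      ((dA + (-\<i>) * (AH + AV)) - (dB + (-\<i>) * (BH + BV)))) (at t)"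
      using has_vector_derivative_diff[OF dA[where n=n, OF v propU psi g] dB[where n=n, OF v propU psi g]]
      unfolding f1 f2 by (simp only: dA_def dB_def \<phi>_def)
    have "((\<lambda>s. ee n s * ((\<Sum>\<^sub>\<infinity>j. alpha V n l s j * U s \<psi> j) - (\<Sum>\<^sub>\<infinity>j. beta V n l s j * U s \<psi> j))) has_vector_derivative
      (e * ((dA + (-\<i>) * (AH + AV)) - (dB + (-\<i>) * (BH + BV))) + (\<i> * Ec * e) * (A0 - B0))) (at t)"
      using has_vector_derivative_mult[OF ee_deriv dd] unfolding e_def Ec_def A0_def B0_def \<phi>_def by simp
    then show ?thesis unfolding Gf_def[abs_def] by (rule has_vector_derivative_mult_right)
  qed
  have "lhs_integrand V U n l \<psi> t n - rhs_integrand V U n l \<psi> t n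
      = \<i> * (e * ((dA + (-\<i>) * (AH + AV)) - (dB + (-\<i>) * (BH + BV))) + (\<i> * Ec * e) * (A0 - B0))"
    unfolding lhs rhs f3 f4 f5 by (rule final_alg)
  with d show ?thesis by simp
qed

lemma bdry_eq: assumes g: "gd l s" shows "bdry V U n l \<psi> s n = Gf V U n l \<psi> s"
proof -
  have "bdry V U n l \<psi> s n = \<i> * (ee n s * (T1 V n l s (U s \<psi>) n - T2 V n l s (U s \<psi>) n))"
    unfolding bdry_def Let_def U0_Omega U0adj_n ..
  also have "T2 V n l s (U s \<psi>) n = (\<Sum>\<^sub>\<infinity>j. beta V n l s j * U s \<psi> j)"
    by (rule T2_repr[OF v g phi_ell2[OF v propU psi]])
  finally show ?thesis unfolding Gf_def T1_repr .
qed

lemma lhs_cont: "isCont (\<lambda>t. lhs_integrand V U n l \<psi> t n) t"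
proof -
  define w where "w j = c0 * Vhat V (n - j) * (if j = n \<or> j = - n - l then 0 else 1)" for j
  have eq: "lhs_integrand V U n l \<psi> s n = ee n s * (\<Sum>\<^sub>\<infinity>j. w j * U s \<psi> j)" for s
  proof -
    have "lhs_integrand V U n l \<psi> s n = ee n s * (c0 * (\<Sum>\<^sub>\<infinity>j. Vhat V (n - j) * PPperp n l (U s \<psi>) j))"
      unfolding lhs_integrand_def U0_Omega U0adj_n Pm_def Vop_eq[OF v] by simp
    also have "c0 * (\<Sum>\<^sub>\<infinity>j. Vhat V (n - j) * PPperp n l (U s \<psi>) j) = (\<Sum>\<^sub>\<infinity>j. c0 * (Vhat V (n - j) * PPperp n l (U s \<psi>) j))"
      by (rule infsum_cmult_right'[symmetric])
    also have "\<dots> = (\<Sum>\<^sub>\<infinity>j. w j * U s \<psi> j)"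
      by (rule infsum_cong) (simp add: w_def PPperp_def)
    finally show ?thesis .
  qed
  have w2: "ell2 w"
    by (rule ell2_comparison(1)[OF ell2_shift1[OF v, where a=n], where C=C0]) (simp add: w_def norm_mult cmod_c0 C0_nonneg)
  have "((\<lambda>s. \<Sum>\<^sub>\<infinity>j. w j * U s \<psi> j) has_vector_derivative
      ((\<Sum>\<^sub>\<infinity>j. 0 * U t \<psi> j) + (\<Sum>\<^sub>\<infinity>j. w j * (- \<i> * Hop V t (U t \<psi>) j)))) (at t)"
  proof (rule pairing_deriv[where w="om n" and K=0 and B="l2norm \<psi>" and a="\<lambda>s. w"
        and \<phi>="\<lambda>s. U s \<psi>" and D="\<lambda>k. - \<i> * Hop V t (U t \<psi>) k"])
    show "(\<lambda>j. (om n j)\<^sup>2) summable_on UNIV" by (rule om_sq_summable)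
    show "ell2 (\<lambda>k. - \<i> * Hop V t (U t \<psi>) k)" by (rule D_ell2[OF v propU psi])
    show "l2_has_deriv (\<lambda>s. U s \<psi>) (\<lambda>k. - \<i> * Hop V t (U t \<psi>) k) t" by (rule phi_der[OF v propU psi])
  qed (simp_all add: w2 ell2_zero phi_ell2[OF v propU psi] phi_norm[OF v propU psi] D_ell2[OF v propU psi] phi_der[OF v propU psi])
  then have c1: "isCont (\<lambda>s. \<Sum>\<^sub>\<infinity>j. w j * U s \<psi> j) t"
    by (rule has_vector_derivative_continuous)
  have c2: "isCont (ee n) t" by (rule has_vector_derivative_continuous[OF ee_deriv])
  have "isCont (\<lambda>s. ee n s * (\<Sum>\<^sub>\<infinity>j. w j * U s \<psi> j)) t" by (intro isCont_mult c1 c2)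
  then show ?thesis unfolding eq .
qed

end

theorem lemma2:
  fixes V :: "real \<Rightarrow> real"
    and U :: "real \<Rightarrow> (int \<Rightarrow> complex) \<Rightarrow> (int \<Rightarrow> complex)"
    and n l :: int and s1 s2 :: real and \<psi> :: "int \<Rightarrow> complex"
  assumes periodic: "\<forall>x. V (x + 2*pi) = V x"
    and integrable: "V absolutely_integrable_on {0..2*pi}"
    and norm0: "norm0_finite V"
    and nl: "2*n + l \<noteq> 0"
    and s12: "s1 < s2"
    and s1_ge: "real_of_int l / 2 - 1/4 \<le> s1"
    and s2_le: "s2 \<le> real_of_int l / 2 + 1/4"
    and propU: "is_propagator V U"
    and psi: "H2 \<psi>"
  shows "\<forall>m. (\<lambda>t. lhs_integrand V U n l \<psi> t m) integrable_on {s1..s2}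
           \<and> (\<lambda>t. rhs_integrand V U n l \<psi> t m) integrable_on {s1..s2}
           \<and> integral {s1..s2} (\<lambda>t. lhs_integrand V U n l \<psi> t m)
             = integral {s1..s2} (\<lambda>t. rhs_integrand V U n l \<psi> t m)
               + (bdry V U n l \<psi> s2 m - bdry V U n l \<psi> s1 m)"
proof -
  have v: "ell2 (Vhat V)" using norm0 unfolding norm0_finite_def ell2_def .
  have gdI: "gd l t" if "t \<in> {s1..s2}" for t
  proof -
    have "s1 \<le> t" "t \<le> s2" using that by auto
    then have "\<bar>t - real_of_int l / 2\<bar> \<le> 1/4" using s1_ge s2_le unfolding abs_le_iff by linarith
    then show ?thesis unfolding gd_def by linarith
  qed
  show ?thesis
  proof
    fix m
    show "(\<lambda>t. lhs_integrand V U n l \<psi> t m) integrable_on {s1..s2}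
           \<and> (\<lambda>t. rhs_integrand V U n l \<psi> t m) integrable_on {s1..s2}
           \<and> integral {s1..s2} (\<lambda>t. lhs_integrand V U n l \<psi> t m)
             = integral {s1..s2} (\<lambda>t. rhs_integrand V U n l \<psi> t m)
               + (bdry V U n l \<psi> s2 m - bdry V U n l \<psi> s1 m)"
    proof (cases "m = n")
      case True
      define f where "f t = lhs_integrand V U n l \<psi> t n" for t
      define g where "g t = rhs_integrand V U n l \<psi> t n" for t
      have fc: "continuous_on {s1..s2} f"
        unfolding f_def by (intro continuous_at_imp_continuous_on ballI lhs_cont[OF v propU psi])
      have fi: "f integrable_on {s1..s2}" by (rule integrable_continuous_interval[OF fc])
      have ftc: "((\<lambda>t. f t - g t) has_integral (Gf V U n l \<psi> s2 - Gf V U n l \<psi> s1)) {s1..s2}"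
      proof (rule fundamental_theorem_of_calculus)
        show "s1 \<le> s2" using s12 by simp
        fix x assume "x \<in> {s1..s2}"
        then have "gd l x" by (rule gdI)
        from G_deriv[OF v propU psi this]
        show "(Gf V U n l \<psi> has_vector_derivative f x - g x) (at x within {s1..s2})"
          unfolding f_def g_def by (rule has_vector_derivative_at_within)
      qed
      have "((\<lambda>t. f t - (f t - g t)) has_integral (integral {s1..s2} f - (Gf V U n l \<psi> s2 - Gf V U n l \<psi> s1))) {s1..s2}"
        by (rule has_integral_diff[OF integrable_integral[OF fi] ftc])
      then have gi: "(g has_integral (integral {s1..s2} f - (Gf V U n l \<psi> s2 - Gf V U n l \<psi> s1))) {s1..s2}"
        by simp
      have b1: "bdry V U n l \<psi> s1 n = Gf V U n l \<psi> s1" using gdI[of s1] s12 by (intro bdry_eq[OF v propU psi]) auto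
      have b2: "bdry V U n l \<psi> s2 n = Gf V U n l \<psi> s2" using gdI[of s2] s12 by (intro bdry_eq[OF v propU psi]) auto
      have "g integrable_on {s1..s2}" using gi by blast
      moreover have "integral {s1..s2} g = integral {s1..s2} f - (Gf V U n l \<psi> s2 - Gf V U n l \<psi> s1)"
        using gi by (rule integral_unique)
      ultimately show ?thesis using fi True b1 b2 unfolding f_def g_def by simp
    next
      case False
      have l0: "lhs_integrand V U n l \<psi> t m = 0" for t
        unfolding lhs_integrand_def U0adj_def Pm_def using False by simp
      have r0: "rhs_integrand V U n l \<psi> t m = 0" for t
      proof -
        have d1: "dT (T1 V n l) t x m = 0" for x
          unfolding dT_def T1_other[OF False] by simp
        have d2: "dT (T2 V n l) t x m = 0" for x
          unfolding dT_def T2_other[OF False] by simp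
        show ?thesis unfolding rhs_integrand_def Let_def U0adj_def
          by (simp add: d1 d2 T1_other[OF False] T2_other[OF False])
      qed
      have b0: "bdry V U n l \<psi> t m = 0" for t
        unfolding bdry_def Let_def U0adj_def by (simp add: T1_other[OF False] T2_other[OF False])
      show ?thesis unfolding l0 r0 b0 by (simp add: integrable_0)
    qed
  qed
qed


end
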